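(* Let $r_\pm=(11\pm5\sqrt5)/2$ and $r\in\mathbb{R}\setminus\{0,r_-,r_+\}$. Then the real projective curve $E_r$ has an unbounded connected component which contains the points $[1:0:0],[0:1:0],[1:-1:0],[-1:0:1],[0:-1:1]$ and which is otherwise disjoint from the coordinate axes $\{x=0\},\{y=0\}$ and from the line at infinity $\{z=0\}$. If $r\in(-\infty,r_-)\cup(0,r_+)$ this is the only component. If $r\in(r_-,0)$, $E_r$ has exactly one further component, which is bounded and lies in the open quadrant $\{x<0,y<0\}$. If $r\in(r_+,\infty)$, $E_r$ has exactly one further component, which is bounded and lies in the open quadrant $\{x>0,y>0\}$.
   Context: $E_r\subset\mathbb{RP}^2$ is the zero set of $Q(x,y,z)=x^2y+xy^2+x^2z+y^2z+(3-r)xyz+2xz^2+2yz^2+z^3$, the homogenization of $(x+1)(y+1)(x+y+1)-rxy$. Affine points $(x,y)$ are identified with $[x:y:1]$. A component is unbounded if its intersection with the affine plane $\{z\ne0\}$ is an unbounded subset of $\mathbb{R}^2$, bounded otherwise. *)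

theory Defs
  imports "HOL-Analysis.Analysis"
begin

text \<open>Real projective plane: points are punctured lines through the origin in R^3,
  carrying the quotient topology of R^3 minus the origin.\<close>

definition pcls :: "real^3 \<Rightarrow> (real^3) set" where
  "pcls v = {c *\<^sub>R v | c. c \<noteq> 0}"

definition RP2 :: "(real^3) set set" where
  "RP2 = pcls ` (- {0})"

definition RP2_open :: "(real^3) set set \<Rightarrow> bool" where
  "RP2_open U \<longleftrightarrow> U \<subseteq> RP2 \<and> open {v. v \<noteq> 0 \<and> pcls v \<in> U}"

lemma istopology_RP2_open: "istopology RP2_open"
  unfolding istopology_def
proof (intro conjI allI impI)
  fix S T assume "RP2_open S" "RP2_open T"
  moreover have "{v. v \<noteq> 0 \<and> pcls v \<in> S \<inter> T} = {v. v \<noteq> 0 \<and> pcls v \<in> S} \<inter> {v. v \<noteq> 0 \<and> pcls v \<in> T}" by auto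
  ultimately show "RP2_open (S \<inter> T)"
    unfolding RP2_open_def by auto
next
  fix K assume K: "\<forall>S\<in>K. RP2_open S"
  have "{v. v \<noteq> 0 \<and> pcls v \<in> \<Union>K} = (\<Union>S\<in>K. {v. v \<noteq> 0 \<and> pcls v \<in> S})" by auto
  moreover have "open (\<Union>S\<in>K. {v. v \<noteq> 0 \<and> pcls v \<in> S})"
    using K unfolding RP2_open_def by auto
  ultimately show "RP2_open (\<Union>K)" using K unfolding RP2_open_def by auto
qed

definition RP2_top :: "(real^3) set topology" where
  "RP2_top = topology RP2_open"

definition pt :: "real \<Rightarrow> real \<Rightarrow> real \<Rightarrow> (real^3) set" where
  "pt x y z = pcls (vector [x, y, z])"

definition Qr :: "real \<Rightarrow> real \<Rightarrow> real \<Rightarrow> real \<Rightarrow> real" where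
  "Qr r x y z = x^2*y + x*y^2 + x^2*z + y^2*z + (3 - r)*x*y*z + 2*x*z^2 + 2*y*z^2 + z^3"

definition Ecurve :: "real \<Rightarrow> (real^3) set set" where
  "Ecurve r = {pt x y z | x y z. (x, y, z) \<noteq> (0, 0, 0) \<and> Qr r x y z = 0}"

definition affine_part :: "(real^3) set set \<Rightarrow> (real \<times> real) set" where
  "affine_part S = {(x, y). pt x y 1 \<in> S}"

definition line_x0 :: "(real^3) set set" where
  "line_x0 = {pt 0 y z | y z. (y, z) \<noteq> (0, 0)}"
definition line_y0 :: "(real^3) set set" where
  "line_y0 = {pt x 0 z | x z. (x, z) \<noteq> (0, 0)}"
definition line_z0 :: "(real^3) set set" where
  "line_z0 = {pt x y 0 | x y. (x, y) \<noteq> (0, 0)}"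

definition r_minus :: real where "r_minus = (11 - 5 * sqrt 5) / 2"
definition r_plus :: real where "r_plus = (11 + 5 * sqrt 5) / 2"

end

theory Submission
  imports Defs
begin



lemma RP2_open_RP2: "RP2_open RP2"
proof -
  have "{v. v \<noteq> 0 \<and> pcls v \<in> RP2} = - {0}" by (auto simp: RP2_def)
  then show ?thesis unfolding RP2_open_def by auto
qed

lemma openin_RP2_top: "openin RP2_top = RP2_open"
  by (simp add: RP2_top_def istopology_RP2_open)

lemma topspace_RP2_top: "topspace RP2_top = RP2"
  unfolding topspace_def openin_RP2_top using RP2_open_RP2 by (auto simp: RP2_open_def)

lemma pcls_scale: "c \<noteq> 0 \<Longrightarrow> pcls (c *\<^sub>R v) = pcls v"
  unfolding pcls_def
proof (safe)
  fix d :: real assume "c \<noteq> 0" "d \<noteq> 0"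
  then show "\<exists>e. d *\<^sub>R c *\<^sub>R v = e *\<^sub>R v \<and> e \<noteq> 0" by (intro exI[of _ "d*c"]) auto
next
  fix d :: real assume "c \<noteq> 0" "d \<noteq> 0"
  then show "\<exists>e. d *\<^sub>R v = e *\<^sub>R c *\<^sub>R v \<and> e \<noteq> 0" by (intro exI[of _ "d/c"]) auto
qed

lemma pcls_self: "v \<in> pcls v"
  unfolding pcls_def by (auto intro: exI[of _ 1])

lemma pcls_eqD: "pcls v = pcls w \<Longrightarrow> \<exists>c. c \<noteq> 0 \<and> w = c *\<^sub>R v"
  using pcls_self[of w] unfolding pcls_def by auto

lemma pcls_in_RP2: "v \<noteq> 0 \<Longrightarrow> pcls v \<in> RP2"
  by (auto simp: RP2_def)

lemma continuous_map_pcls: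
  assumes "continuous_on I f" "\<And>t. t \<in> I \<Longrightarrow> f t \<noteq> 0"
  shows "continuous_map (top_of_set I) RP2_top (\<lambda>t. pcls (f t))"
  unfolding continuous_map_def topspace_RP2_top openin_RP2_top
proof (intro conjI allI impI)
  show "(\<lambda>t. pcls (f t)) \<in> topspace (top_of_set I) \<rightarrow> RP2"
    using assms(2) pcls_in_RP2 by auto
  fix U assume "RP2_open U"
  then have o: "open {v. v \<noteq> 0 \<and> pcls v \<in> U}" by (simp add: RP2_open_def)
  have "{x \<in> topspace (top_of_set I). pcls (f x) \<in> U} = I \<inter> f -` {v. v \<noteq> 0 \<and> pcls v \<in> U}"
    using assms(2) by auto
  then show "openin (top_of_set I) {x \<in> topspace (top_of_set I). pcls (f x) \<in> U}"
    using continuous_openin_preimage_gen[OF assms(1) o] by simp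
qed

lemma connectedin_pcls_image:
  assumes "continuous_on I f" "\<And>t. t \<in> I \<Longrightarrow> f t \<noteq> 0" "connected I"
  shows "connectedin RP2_top ((\<lambda>t. pcls (f t)) ` I)"
  using connectedin_continuous_map_image[OF continuous_map_pcls[OF assms(1,2)]] assms(3) by simp

definition psetp :: "(real^3 \<Rightarrow> bool) \<Rightarrow> (real^3) set set" where
  "psetp P = {pcls v | v. v \<noteq> 0 \<and> P v}"

lemma psetp_mem:
  assumes inv: "\<And>c v. c \<noteq> 0 \<Longrightarrow> P (c *\<^sub>R v) = P v" and "w \<noteq> 0"
  shows "pcls w \<in> psetp P \<longleftrightarrow> P w"
proof
  assume "pcls w \<in> psetp P"
  then obtain v where "v \<noteq> 0" "P v" "pcls v = pcls w" by (auto simp: psetp_def)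
  then obtain c where "c \<noteq> 0" "w = c *\<^sub>R v" using pcls_eqD by blast
  then show "P w" using inv \<open>P v\<close> by simp
qed (use assms in \<open>auto simp: psetp_def\<close>)

lemma openin_psetp:
  assumes inv: "\<And>c v. c \<noteq> 0 \<Longrightarrow> P (c *\<^sub>R v) = P v" and o: "open {v. v \<noteq> 0 \<and> P v}"
  shows "openin RP2_top (psetp P)"
  unfolding openin_RP2_top RP2_open_def
proof
  show "psetp P \<subseteq> RP2" by (auto simp: psetp_def pcls_in_RP2)
  have "{v. v \<noteq> 0 \<and> pcls v \<in> psetp P} = {v. v \<noteq> 0 \<and> P v}"
    using psetp_mem[OF inv] by blast
  then show "open {v. v \<noteq> 0 \<and> pcls v \<in> psetp P}" using o by simp
qed

lemma two_components:
  assumes "topspace X = C \<union> D" "C \<inter> D = {}" "C \<noteq> {}" "D \<noteq> {}"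
    "connectedin X C" "connectedin X D" "openin X C" "openin X D"
  shows "connected_components_of X = {C, D}"
proof -
  have e1: "topspace X - C = D" "topspace X - D = C" using assms(1,2) by blast+
  have cC: "closedin X C" unfolding closedin_def e1 using assms(1,8) by auto
  have cD: "closedin X D" unfolding closedin_def e1 using assms(1,7) by auto
  have comp: "connected_component_of_set X x = (if x \<in> C then C else D)" if "x \<in> topspace X" for x
  proof -
    have k: "connectedin X (connected_component_of_set X x)" by (rule connectedin_connected_component_of)
    have xin: "x \<in> connected_component_of_set X x" using that connected_component_of_refl by fastforce
    show ?thesis
    proof (cases "x \<in> C")
      case True
      have "C \<subseteq> connected_component_of_set X x" using connected_component_of_maximal[OF assms(5) True] .
      moreover have "connected_component_of_set X x \<subseteq> C"
        using connectedin_clopen_cases[OF k cC assms(7)] xin True by (auto simp: disjnt_def)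
      ultimately show ?thesis using True by auto
    next
      case False
      then have xD: "x \<in> D" using that assms(1) by auto
      have "D \<subseteq> connected_component_of_set X x" using connected_component_of_maximal[OF assms(6) xD] .
      moreover have "connected_component_of_set X x \<subseteq> D"
        using connectedin_clopen_cases[OF k cD assms(8)] xin xD by (auto simp: disjnt_def)
      ultimately show ?thesis using False by auto
    qed
  qed
  obtain c d where cd: "c \<in> C" "d \<in> D" using assms by auto
  have dC: "d \<notin> C" using cd assms(2) by auto
  show ?thesis unfolding connected_components_of_def
  proof
    show "connected_component_of_set X ` topspace X \<subseteq> {C, D}" using comp by auto
    have "C = connected_component_of_set X c" "D = connected_component_of_set X d"
      using comp[of c] comp[of d] cd dC assms(1) by auto
    then show "{C, D} \<subseteq> connected_component_of_set X ` topspace X"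
      using cd assms(1) by auto
  qed
qed





definition mk :: "real \<Rightarrow> real \<Rightarrow> real \<Rightarrow> real^3" where
  "mk S D Z = vector [(S+D)/2, (S-D)/2, Z]"

definition Qv :: "real \<Rightarrow> real^3 \<Rightarrow> real" where
  "Qv r v = Qr r (v$1) (v$2) (v$3)"

lemma mk_nth[simp]: "mk S D Z $ 1 = (S+D)/2" "mk S D Z $ 2 = (S-D)/2" "mk S D Z $ 3 = Z"
  by (simp_all add: mk_def)

lemma mk_alt: "mk S D Z = ((S+D)/2) *\<^sub>R axis 1 1 + ((S-D)/2) *\<^sub>R axis 2 1 + Z *\<^sub>R axis 3 1"
  unfolding vec_eq_iff forall_3 by (simp add: axis_def)

lemma continuous_on_mk[continuous_intros]:
  "continuous_on I f \<Longrightarrow> continuous_on I g \<Longrightarrow> continuous_on I h \<Longrightarrow>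
   continuous_on I (\<lambda>t. mk (f t) (g t) (h t))"
  unfolding mk_alt by (intro continuous_intros) auto

lemma mk_eq_iff: "mk S D Z = mk S' D' Z' \<longleftrightarrow> S = S' \<and> D = D' \<and> Z = Z'"
  unfolding vec_eq_iff forall_3 by auto

lemma mk_eq_0: "mk S D Z = 0 \<longleftrightarrow> S = 0 \<and> D = 0 \<and> Z = 0"
  unfolding vec_eq_iff forall_3 by auto

lemma vec_mk: "v = mk (v$1 + v$2) (v$1 - v$2) (v$3)"
  unfolding vec_eq_iff forall_3 by auto

lemma mk_scale: "c *\<^sub>R mk S D Z = mk (c*S) (c*D) (c*Z)"
  unfolding vec_eq_iff forall_3 by (auto simp: algebra_simps)

lemma pt_mk: "pt x y z = pcls (mk (x+y) (x-y) z)"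
proof -
  have "vector [x,y,z] = mk (x+y) (x-y) z" unfolding vec_eq_iff forall_3 by auto
  then show ?thesis by (simp add: pt_def)
qed

lemma mk_pt: "pcls (mk S D Z) = pt ((S+D)/2) ((S-D)/2) Z"
proof -
  have "(S+D)/2 + (S-D)/2 = S" "(S+D)/2 - (S-D)/2 = D" by (simp_all add: field_simps)
  then show ?thesis by (simp add: pt_mk)
qed

lemma Qv_mk: "Qv r (mk S D Z) = ((S^2-D^2)*(S+(1-r)*Z) + 4*Z*(S+Z)^2)/4"
  unfolding Qv_def Qr_def by (simp add: field_simps power2_eq_square power3_eq_cube)

lemma Qv_scale: "Qv r (c *\<^sub>R v) = c^3 * Qv r v"
  unfolding Qv_def Qr_def by (simp add: algebra_simps power2_eq_square power3_eq_cube)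

lemma Ecurve_eq: "Ecurve r = {pcls v | v. v \<noteq> 0 \<and> Qv r v = 0}"
proof (intro subset_antisym subsetI)
  fix P assume "P \<in> Ecurve r"
  then obtain x y z where "P = pt x y z" "(x, y, z) \<noteq> (0, 0, 0)" "Qr r x y z = 0"
    unfolding Ecurve_def by blast
  then show "P \<in> {pcls v | v. v \<noteq> 0 \<and> Qv r v = 0}"
    by (intro CollectI exI[of _ "vector [x,y,z]"]) (auto simp: pt_def Qv_def vec_eq_iff forall_3)
next
  fix P assume "P \<in> {pcls v | v. v \<noteq> 0 \<and> Qv r v = 0}"
  then obtain v where v: "P = pcls v" "v \<noteq> 0" "Qv r v = 0" by blast
  have "vector [v$1, v$2, v$3] = v" unfolding vec_eq_iff forall_3 by simp
  moreover have "(v$1, v$2, v$3) \<noteq> (0, 0, 0)" using v(2) by (auto simp: vec_eq_iff forall_3)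
  ultimately show "P \<in> Ecurve r" unfolding Ecurve_def pt_def using v
    by (intro CollectI exI[of _ "v$1"] exI[of _ "v$2"] exI[of _ "v$3"]) (auto simp: Qv_def)
qed

lemma Ecurve_mem: "w \<noteq> 0 \<Longrightarrow> pcls w \<in> Ecurve r \<longleftrightarrow> Qv r w = 0"
proof
  assume "w \<noteq> 0" "pcls w \<in> Ecurve r"
  then obtain v where "v \<noteq> 0" "Qv r v = 0" "pcls v = pcls w" by (auto simp: Ecurve_eq)
  then obtain c where "c \<noteq> 0" "w = c *\<^sub>R v" using pcls_eqD by blast
  then show "Qv r w = 0" using \<open>Qv r v = 0\<close> by (simp add: Qv_scale)
qed (auto simp: Ecurve_eq)

lemma Ecurve_sub_RP2: "Ecurve r \<subseteq> RP2"
  by (auto simp: Ecurve_eq pcls_in_RP2)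

lemma pcls_mk_scale: "c \<noteq> 0 \<Longrightarrow> pcls (mk (c*S) (c*D) (c*Z)) = pcls (mk S D Z)"
  by (metis mk_scale pcls_scale)

lemma pcls_mk_aff: "Z \<noteq> 0 \<Longrightarrow> pcls (mk S D Z) = pcls (mk (S/Z) (D/Z) 1)"
  using pcls_mk_scale[of "1/Z" S D Z] by simp

lemma pcls_mk1_inj: "pcls (mk s d 1) = pcls (mk s' d' 1) \<Longrightarrow> s = s' \<and> d = d'"
proof -
  assume "pcls (mk s d 1) = pcls (mk s' d' 1)"
  then obtain c where "c \<noteq> 0" "mk s' d' 1 = c *\<^sub>R mk s d 1" using pcls_eqD by blast
  then have "mk s' d' 1 = mk (c* s) (c*d) c" by (simp add: mk_scale)
  then show ?thesis by (simp add: mk_eq_iff)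
qed

lemma pcls_mk1_ne_inf: "pcls (mk s d 1) \<noteq> pcls (mk S D 0)"
proof
  assume "pcls (mk s d 1) = pcls (mk S D 0)"
  then obtain c where "c \<noteq> 0" "mk S D 0 = c *\<^sub>R mk s d 1" using pcls_eqD by blast
  then have "mk S D 0 = mk (c* s) (c*d) c" by (simp add: mk_scale)
  then show False using \<open>c \<noteq> 0\<close> by (simp add: mk_eq_iff)
qed

definition hh :: "real \<Rightarrow> real \<Rightarrow> real" where
  "hh r s = -(s^3) + (r-5)* s^2 - 8* s - 4"

lemma aff_curve: "Qv r (mk s d 1) = 0 \<longleftrightarrow> d^2 * (s+1-r) = - hh r s"
  unfolding Qv_mk hh_def by (auto simp: algebra_simps power2_eq_square power3_eq_cube)

lemma hh_neg: assumes "r \<noteq> 0" "s \<ge> r - 1" shows "hh r s < 0"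
proof -
  have e: "hh r s = - (s^2*(s+1-r) + 4*(s+1)^2)" unfolding hh_def by (simp add: algebra_simps power2_eq_square power3_eq_cube)
  have a: "s^2*(s+1-r) \<ge> 0" using assms by simp
  have "s^2*(s+1-r) + 4*(s+1)^2 > 0"
  proof (cases "s = -1")
    case True
    then have "r < 0" using assms by auto
    then show ?thesis using True by simp
  next
    case False
    then have "(s+1)^2 > 0" by simp
    with a show ?thesis by linarith
  qed
  then show ?thesis using e by simp
qed




lemma hh_at_neg1: "hh r (-1) = r" unfolding hh_def by simp
lemma hh_at_0: "hh r 0 = -4" unfolding hh_def by simp

lemma hh_factor: "hh r s = hh r a - (s-a)*(s^2 + (a-r+5)* s + (a*(a-r+5)+8))"
  unfolding hh_def by (simp add: algebra_simps power2_eq_square power3_eq_cube)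

lemma hh_disc: assumes "hh r a = 0"
  shows "((a-r+5)^2 - 4*(a*(a-r+5)+8)) * (a^2 + (a-r+5)*a + (a*(a-r+5)+8))^2 = 16*r*(r^2-11*r-1)"
  using assms unfolding hh_def by algebra

lemma hh_root_exists: assumes "r \<noteq> 0" shows "\<exists>a. hh r a = 0 \<and> a < 0 \<and> a < r - 1"
proof -
  define M where "M = \<bar>r\<bar> + 10"
  define b where "b = min 0 (r-1)"
  have hb: "hh r b < 0"
    using hh_neg[OF assms, of b] hh_at_0[of r] unfolding b_def by (cases "r - 1 \<le> 0") auto
  have M1: "M + r - 5 \<ge> 5" "M \<ge> 10" unfolding M_def by auto
  have "M^2 * (M + r - 5) \<ge> M^2 * 5" using M1 by (intro mult_left_mono) auto
  moreover have "M^2 \<ge> 100" using M1 power_mono[of 10 M 2] by simp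
  moreover have "hh r (-M) = M^2 * (M + r - 5) + 8*M - 4" unfolding hh_def
    by (simp add: algebra_simps power2_eq_square power3_eq_cube)
  ultimately have hM: "hh r (-M) > 0" using M1 by linarith
  have "-M \<le> b" unfolding M_def b_def by auto
  moreover have "continuous_on {-M..b} (hh r)" unfolding hh_def by (intro continuous_intros)
  ultimately obtain x where x: "-M \<le> x" "x \<le> b" "hh r x = 0"
    using IVT2'[of "hh r" b 0 "-M"] hb hM by auto
  then have "x \<noteq> b" using hb by auto
  then show ?thesis using x unfolding b_def by (intro exI[of _ x]) auto
qed

lemma one_root:
  assumes "r \<noteq> 0" "r*(r^2-11*r-1) < 0"
  shows "\<exists>L. L < 0 \<and> L < r - 1 \<and> hh r L = 0 \<and> (\<forall>s. hh r s \<ge> 0 \<longleftrightarrow> s \<le> L)"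
proof -
  obtain a where a: "hh r a = 0" "a < 0" "a < r - 1" using hh_root_exists[OF assms(1)] by blast
  define \<beta> where "\<beta> = a - r + 5"
  define \<gamma> where "\<gamma> = a*\<beta> + 8"
  define qa where "qa = a^2 + \<beta>*a + \<gamma>"
  have dd: "(\<beta>^2 - 4*\<gamma>) * qa^2 = 16*r*(r^2-11*r-1)"
    using hh_disc[OF a(1)] unfolding \<beta>_def \<gamma>_def qa_def by simp
  have disc: "\<beta>^2 - 4*\<gamma> < 0"
  proof (rule ccontr)
    assume "\<not> ?thesis"
    then have "(\<beta>^2 - 4*\<gamma>) * qa^2 \<ge> 0" by simp
    then show False using dd assms(2) by simp
  qed
  have q: "s^2 + \<beta>* s + \<gamma> > 0" for s
  proof -
    have e: "4*(s^2 + \<beta>* s + \<gamma>) = (2* s+\<beta>)^2 - (\<beta>^2 - 4*\<gamma>)" by (simp add: algebra_simps power2_eq_square)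
    have "(2* s+\<beta>)^2 - (\<beta>^2 - 4*\<gamma>) > 0" using disc by (smt (verit) zero_le_power2)
    then show ?thesis using e by (smt (verit))
  qed
  have hs: "hh r s = - ((s - a) * (s^2 + \<beta>* s + \<gamma>))" for s
    using hh_factor[of r s a] a(1) unfolding \<beta>_def \<gamma>_def by simp
  have "hh r s \<ge> 0 \<longleftrightarrow> s \<le> a" for s
  proof
    assume "hh r s \<ge> 0"
    then have "(s - a) * (s^2 + \<beta>* s + \<gamma>) \<le> 0" using hs[of s] by simp
    then show "s \<le> a" using q[of s] by (simp add: mult_le_0_iff)
  next
    assume "s \<le> a"
    then have "(s - a) * (s^2 + \<beta>* s + \<gamma>) \<le> 0" using q[of s] by (simp add: mult_le_0_iff)
    then show "hh r s \<ge> 0" using hs[of s] by simp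
  qed
  then show ?thesis using a by blast
qed

lemma sort3:
  fixes a b c :: real
  assumes "b < c" "a \<noteq> b" "a \<noteq> c"
  shows "\<exists>e1 e2 e3. e1 < e2 \<and> e2 < e3 \<and> (\<forall>s. (s-a)*((s-b)*(s-c)) = (s-e1)*(s-e2)*(s-e3))"
proof -
  consider "a < b" | "b < a \<and> a < c" | "c < a" using assms by linarith
  then show ?thesis
  proof cases
    case 1 then show ?thesis using assms by (intro exI[of _ a] exI[of _ b] exI[of _ c]) (auto simp: algebra_simps)
  next
    case 2 then show ?thesis using assms by (intro exI[of _ b] exI[of _ a] exI[of _ c]) (auto simp: algebra_simps)
  next
    case 3 then show ?thesis using assms by (intro exI[of _ b] exI[of _ c] exI[of _ a]) (auto simp: algebra_simps)
  qed
qed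

lemma three_roots:
  assumes "r \<noteq> 0" "r*(r^2-11*r-1) > 0"
  shows "\<exists>e1 e2 e3. e1 < e2 \<and> e2 < e3 \<and> e3 < r - 1 \<and> e1 < 0 \<and>
            (\<forall>s. hh r s = - ((s-e1)*(s-e2)*(s-e3)))"
proof -
  obtain a where a: "hh r a = 0" "a < 0" "a < r - 1" using hh_root_exists[OF assms(1)] by blast
  define \<beta> where "\<beta> = a - r + 5"
  define \<gamma> where "\<gamma> = a*\<beta> + 8"
  define qa where "qa = a^2 + \<beta>*a + \<gamma>"
  define \<delta> where "\<delta> = \<beta>^2 - 4*\<gamma>"
  have dd: "\<delta> * qa^2 = 16*r*(r^2-11*r-1)"
    using hh_disc[OF a(1)] unfolding \<beta>_def \<gamma>_def qa_def \<delta>_def by simp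
  have pp: "\<delta> * qa^2 > 0" using dd assms(2) by simp
  have dpos: "\<delta> > 0"
  proof (rule ccontr)
    assume "\<not> ?thesis"
    then have "\<delta> * qa^2 \<le> 0" by (simp add: mult_nonpos_nonneg)
    then show False using pp by simp
  qed
  have qa0: "qa \<noteq> 0" using pp by auto
  define b where "b = (-\<beta> - sqrt \<delta>)/2"
  define c where "c = (-\<beta> + sqrt \<delta>)/2"
  have sq: "sqrt \<delta> ^2 = \<delta>" "sqrt \<delta> > 0" using dpos by auto
  have qf: "s^2 + \<beta>* s + \<gamma> = (s-b)*(s-c)" for s
  proof -
    have "(s-b)*(s-c) = s^2 + \<beta>* s + (\<beta>^2 - sqrt \<delta>^2)/4"
      unfolding b_def c_def by (simp add: field_simps power2_eq_square)
    also have "\<dots> = s^2 + \<beta>* s + \<gamma>" using sq unfolding \<delta>_def by simp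
    finally show ?thesis by simp
  qed
  have bc: "b < c" using sq unfolding b_def c_def by simp
  have "(a-b)*(a-c) \<noteq> 0" using qf[of a] qa0 unfolding qa_def by (simp add: power2_eq_square)
  then have ab: "a \<noteq> b" "a \<noteq> c" by auto
  obtain e1 e2 e3 where e: "e1 < e2" "e2 < e3" "\<And>s. (s-a)*((s-b)*(s-c)) = (s-e1)*(s-e2)*(s-e3)"
    using sort3[OF bc ab] by blast
  have hs: "hh r s = - ((s-e1)*(s-e2)*(s-e3))" for s
    using hh_factor[of r s a] a(1) e(3)[of s] qf[of s] unfolding \<beta>_def \<gamma>_def by simp
  have "e3 < r - 1"
  proof (rule ccontr)
    assume "\<not> ?thesis"
    then have "hh r e3 < 0" using hh_neg[OF assms(1)] by simp
    then show False using hs[of e3] by simp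
  qed
  moreover have "e1 < 0"
  proof (rule ccontr)
    assume "\<not> ?thesis"
    then have "0 \<le> e1" by simp
    then have "0 \<le> e1 * e2 * e3" using e by simp
    then show False using hs[of 0] hh_at_0[of r] by simp
  qed
  ultimately show ?thesis using e hs by blast
qed

lemma three_sign:
  assumes "e1 < e2" "e2 < e3" "hh r s = - ((s-e1)*(s-e2)*(s-e3))"
  shows "hh r s \<ge> 0 \<longleftrightarrow> s \<le> e1 \<or> (e2 \<le> s \<and> s \<le> e3)"
proof -
  have "hh r s \<ge> 0 \<longleftrightarrow> (s-e1)*((s-e2)*(s-e3)) \<le> 0" using assms(3) by (simp add: mult.assoc)
  also have "\<dots> \<longleftrightarrow> s \<le> e1 \<or> (e2 \<le> s \<and> s \<le> e3)"
    using assms(1,2)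
    by (cases "s \<le> e1"; cases "s \<le> e2"; cases "s \<le> e3")
       (auto simp: mult_le_0_iff zero_le_mult_iff)
  finally show ?thesis .
qed

lemma hh_decr: assumes "r \<ge> 5" "s < t" "t \<le> 0" shows "hh r s > hh r t"
proof -
  have E: "hh r s - hh r t = (t - s) * ((s^2 + s*t + t^2) + (5 - r)*(s+t) + 8)"
    unfolding hh_def by (simp add: algebra_simps power2_eq_square power3_eq_cube)
  moreover have "s^2 + s*t + t^2 \<ge> 0"
  proof -
    have "s^2 + s*t + t^2 = (s + t/2)^2 + 3/4*t^2" by (simp add: algebra_simps power2_eq_square)
    then show ?thesis by (metis add_nonneg_nonneg mult_nonneg_nonneg zero_le_power2 zero_le_divide_iff zero_le_numeral)
  qed
  moreover have "(5 - r)*(s+t) \<ge> 0" using assms by (intro mult_nonpos_nonpos) auto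
  ultimately have "(s^2 + s*t + t^2) + (5 - r)*(s+t) + 8 > 0" by linarith
  then have "(t - s) * ((s^2 + s*t + t^2) + (5 - r)*(s+t) + 8) > 0" using assms by simp
  then show ?thesis using E by linarith
qed

lemma rpm: "r_minus < 0" "0 < r_plus" "r_plus > 5"
  "r^2 - 11*r - 1 = (r - r_plus) * (r - r_minus)"
proof -
  have s5: "sqrt 5 ^2 = 5" by simp
  have "sqrt 5 > 11/5"
    by (rule real_less_rsqrt) (simp add: power2_eq_square)
  then show "r_minus < 0" "0 < r_plus" "r_plus > 5" unfolding r_minus_def r_plus_def by auto
  show "r^2 - 11*r - 1 = (r - r_plus) * (r - r_minus)"
    unfolding r_minus_def r_plus_def using s5 by (simp add: field_simps power2_eq_square)
qed




definition NN :: "real \<Rightarrow> real \<Rightarrow> real" where "NN r t = 1 + (1-r) * t + 4 * t * (1+t)^2"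
definition den :: "real \<Rightarrow> real \<Rightarrow> real" where "den r t = 1 + (1-r) * t"
definition GG :: "real \<Rightarrow> real \<Rightarrow> real" where "GG r t = NN r t / den r t"
definition kk :: "real \<Rightarrow> real \<Rightarrow> real" where "kk r x = (x - r + 1) / (- hh r x)"
definition PC :: "real \<Rightarrow> real \<Rightarrow> real \<Rightarrow> real^3" where
  "PC r \<sigma> t = mk 1 (\<sigma> * sqrt (GG r t)) t"
definition PB :: "real \<Rightarrow> real \<Rightarrow> real \<Rightarrow> real^3" where
  "PB r \<sigma> x = mk (x * (\<sigma> * sqrt (kk r x))) 1 (\<sigma> * sqrt (kk r x))"
definition mm :: "real \<Rightarrow> real" where "mm r = \<bar>r\<bar> + 1"

definition Cset :: "real \<Rightarrow> real \<Rightarrow> (real^3) set set" where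
  "Cset r L = (\<Union>\<sigma>\<in>{1,-1}. (\<lambda>t. pcls (PC r \<sigma> t)) ` {1/L..1/mm r})
            \<union> (\<Union>\<sigma>\<in>{1,-1}. (\<lambda>x. pcls (PB r \<sigma> x)) ` {r-1..mm r})"

lemma cont_hh[continuous_intros]: "continuous_on S (\<lambda>x. hh r x)"
  unfolding hh_def by (intro continuous_intros)

lemma NN_eq: "t \<noteq> 0 \<Longrightarrow> NN r t = - (t^3) * hh r (1/t)"
  unfolding NN_def hh_def by (simp add: field_simps power2_eq_square power3_eq_cube)

lemma frac_aux1: "(x::real) \<noteq> 0 \<Longrightarrow> B \<noteq> 0 \<Longrightarrow> (d^2*B/x^3)/(B/x) = (d/x)^2"
  by (simp add: field_simps power2_eq_square power3_eq_cube)

lemma frac_aux2: "(d::real) \<noteq> 0 \<Longrightarrow> B \<noteq> 0 \<Longrightarrow> B/(d^2*B) = (1/d)^2"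
  by (simp add: field_simps power2_eq_square)

lemma GG_aff: assumes "x \<noteq> 0" "x \<noteq> r - 1" "d^2 * (x+1-r) = - hh r x"
  shows "GG r (1/x) = (d/x)^2"
proof -
  have n: "NN r (1/x) = - hh r x / x^3" using NN_eq[of "1/x" r] assms(1)
    by (simp add: power_divide)
  have dd: "den r (1/x) = (x+1-r)/x" unfolding den_def using assms(1) by (simp add: field_simps)
  have x1: "x + 1 - r \<noteq> 0" using assms(2) by simp
  have hx: "hh r x = - (d^2 * (x+1-r))" using assms(3) by simp
  show ?thesis unfolding GG_def n dd hx using frac_aux1[OF assms(1) x1, of d] by simp
qed

lemma kk_aff: assumes "x \<noteq> r - 1" "d^2 * (x+1-r) = - hh r x" "d \<noteq> 0"
  shows "kk r x = (1/d)^2"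
proof -
  have x1: "x + 1 - r \<noteq> 0" using assms(1) by simp
  have hx: "hh r x = - (d^2 * (x+1-r))" using assms(2) by simp
  have "x - r + 1 = x + 1 - r" by simp
  then show ?thesis unfolding kk_def hx using frac_aux2[OF assms(3) x1] by (simp only: minus_minus)
qed

lemma sgn_sqrt: "\<exists>\<sigma>::real. (\<sigma> = 1 \<or> \<sigma> = -1) \<and> \<sigma> * sqrt (x^2) = x"
  by (cases "x \<ge> 0") (auto intro: exI[of _ 1] exI[of _ "-1"])

lemma PB_of: assumes "kk r x = (1/d)^2" "\<sigma> * sqrt ((1/d)^2) = 1/d" "d \<noteq> 0"
  shows "pcls (PB r \<sigma> x) = pcls (mk x d 1)"
proof -
  have "PB r \<sigma> x = mk (1/d * x) (1/d * d) (1/d * 1)" unfolding PB_def assms(1) assms(2)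
    using assms(3) by (simp add: mult.commute)
  then show ?thesis using pcls_mk_scale[of "1/d" x d 1] assms(3) by simp
qed

lemma PC_of: assumes "x \<noteq> 0" "GG r (1/x) = (d/x)^2" "\<sigma> * sqrt ((d/x)^2) = d/x"
  shows "pcls (PC r \<sigma> (1/x)) = pcls (mk x d 1)"
proof -
  have "PC r \<sigma> (1/x) = mk (1/x * x) (1/x * d) (1/x * 1)" unfolding PC_def assms(2) assms(3)
    using assms(1) by simp
  then show ?thesis using pcls_mk_scale[of "1/x" x d 1] assms(1) by simp
qed

lemma PC_ne0: "PC r \<sigma> t \<noteq> 0" unfolding PC_def mk_eq_0 by simp
lemma PB_ne0: "PB r \<sigma> x \<noteq> 0" unfolding PB_def mk_eq_0 by simp

lemma GG_0: "GG r 0 = 1" unfolding GG_def NN_def den_def by simp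
lemma PC_0: "PC r 1 0 = mk 1 1 0" "PC r (-1) 0 = mk 1 (-1) 0" unfolding PC_def GG_0 by simp_all
lemma kk_rm1: "kk r (r-1) = 0" unfolding kk_def by simp
lemma PB_rm1: "PB r \<sigma> (r-1) = mk 0 1 0" unfolding PB_def kk_rm1 by simp

lemma mm_pos: "mm r > 0" "mm r > r - 1" "mm r \<ge> 1" unfolding mm_def by auto

locale LL =
  fixes r L :: real
  assumes r0: "r \<noteq> 0" and L0: "L < 0" and Lr: "L < r - 1" and hL: "hh r L = 0"
    and hle: "\<And>x. x \<le> L \<Longrightarrow> hh r x \<ge> 0"
begin

abbreviation "m \<equiv> mm r"
abbreviation "IC \<equiv> {1/L..1/m}"
abbreviation "IB \<equiv> {r-1..m}"

lemma den_pos: assumes "t \<in> IC" shows "den r t > 0"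
proof -
  have a: "den r (1/L) > 0"
  proof -
    have "den r (1/L) = (L + 1 - r)/L" unfolding den_def using L0 by (simp add: field_simps)
    moreover have "L + 1 - r < 0" using Lr by simp
    ultimately show ?thesis using L0 by (simp add: divide_neg_neg)
  qed
  have b: "den r (1/m) > 0"
  proof -
    have "den r (1/m) = (m + 1 - r)/m" unfolding den_def using mm_pos(1)[of r] by (simp add: field_simps)
    moreover have "m + 1 - r > 0" using mm_pos(2)[of r] by simp
    ultimately show ?thesis using mm_pos(1)[of r] by simp
  qed
  have t: "1/L \<le> t" "t \<le> 1/m" using assms by auto
  show ?thesis
  proof (cases "1 - r \<ge> 0")
    case True
    then have "(1-r) * (1/L) \<le> (1-r) * t" using t by (intro mult_left_mono) auto
    then show ?thesis using a unfolding den_def by linarith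
  next
    case False
    then have "(1-r) * t \<ge> (1-r) * (1/m)" using t by (intro mult_left_mono_neg) auto
    then show ?thesis using b unfolding den_def by linarith
  qed
qed

lemma NN_nonneg: assumes "t \<in> IC" shows "NN r t \<ge> 0"
proof -
  consider "t < 0" | "t = 0" | "t > 0" by linarith
  then show ?thesis
  proof cases
    case 1
    have "1/L \<le> t" using assms by auto
    then have "L * t \<le> 1" using L0 by (simp add: field_simps)
    then have "1/t \<le> L" using 1 by (simp add: field_simps)
    then have "hh r (1/t) \<ge> 0" by (rule hle)
    moreover have "t^3 < 0" using 1 by (simp add: power_less_zero_eq)
    ultimately have "t^3 * hh r (1/t) \<le> 0" by (intro mult_nonpos_nonneg) auto
    then show ?thesis using NN_eq[of t r] 1 by simp
  next
    case 2 then show ?thesis unfolding NN_def by simp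
  next
    case 3
    have "t \<le> 1/m" using assms by auto
    then have "1/t \<ge> m" using 3 mm_pos(1)[of r] by (simp add: field_simps)
    then have "hh r (1/t) < 0" using hh_neg[OF r0] mm_pos(2)[of r] by simp
    moreover have "t^3 > 0" using 3 by simp
    ultimately have "t^3 * (- hh r (1/t)) \<ge> 0" by (intro mult_nonneg_nonneg) auto
    then show ?thesis using NN_eq[of t r] 3 by simp
  qed
qed

lemma GG_nonneg: assumes "t \<in> IC" shows "GG r t \<ge> 0"
  unfolding GG_def using NN_nonneg[OF assms] den_pos[OF assms] by simp

lemma PC_curve: assumes "t \<in> IC" "\<sigma> = 1 \<or> \<sigma> = -1" shows "Qv r (PC r \<sigma> t) = 0"
proof -
  have g: "(\<sigma> * sqrt (GG r t))^2 = NN r t / den r t"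
    using GG_nonneg[OF assms(1)] assms(2) by (auto simp: power_mult_distrib GG_def)
  have dp: "den r t \<noteq> 0" using den_pos[OF assms(1)] by simp
  show ?thesis unfolding PC_def Qv_mk g using dp unfolding NN_def den_def
    by (simp add: field_simps)
qed

lemma hB: "x \<in> IB \<Longrightarrow> - hh r x > 0" using hh_neg[OF r0, of x] by auto
lemma kk_nonneg: assumes "x \<in> IB" shows "kk r x \<ge> 0"
  unfolding kk_def using hB[OF assms] assms by (intro divide_nonneg_pos) auto

lemma PB_curve: assumes "x \<in> IB" "\<sigma> = 1 \<or> \<sigma> = -1" shows "Qv r (PB r \<sigma> x) = 0"
proof -
  define Z where "Z = \<sigma> * sqrt (kk r x)"
  have z2: "Z^2 = (x - r + 1) / (- hh r x)"
    using kk_nonneg[OF assms(1)] assms(2) unfolding Z_def by (auto simp: power_mult_distrib kk_def)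
  have hn: "hh r x \<noteq> 0" using hB[OF assms(1)] by simp
  have "Qv r (PB r \<sigma> x) = Z/4 * (Z^2 * (- hh r x) - (x + 1 - r))"
    unfolding PB_def Z_def[symmetric] Qv_mk hh_def
    by (simp add: field_simps power2_eq_square power3_eq_cube)
  also have "\<dots> = 0" using hn unfolding z2 by simp
  finally show ?thesis .
qed

lemma PC_cont: "continuous_on IC (PC r \<sigma>)"
proof -
  have dn: "\<And>t. t \<in> IC \<Longrightarrow> 1 + (1-r) * t \<noteq> 0" using den_pos unfolding den_def by (metis less_irrefl)
  have c: "continuous_on IC (GG r)"
    unfolding GG_def NN_def den_def by (intro continuous_intros) (use dn in auto)
  show ?thesis unfolding PC_def by (intro continuous_intros c)
qed

lemma PB_cont: "continuous_on IB (PB r \<sigma>)"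
proof -
  have dn: "\<And>x. x \<in> IB \<Longrightarrow> - hh r x \<noteq> 0" using hB by (metis less_irrefl)
  have c: "continuous_on IB (kk r)"
    unfolding kk_def by (intro continuous_intros) (use dn in auto)
  show ?thesis unfolding PB_def by (intro continuous_intros c)
qed

lemma IC_ne: "1/L \<le> 1/m"
proof -
  have "1/L < 0" using L0 by simp
  moreover have "1/m > 0" using mm_pos(1)[of r] by simp
  ultimately show ?thesis by linarith
qed

lemma IB_ne: "r - 1 \<le> m" using mm_pos(2)[of r] by simp

lemma conn_C: "connectedin RP2_top ((\<lambda>t. pcls (PC r \<sigma> t)) ` IC)"
  by (rule connectedin_pcls_image[OF PC_cont PC_ne0]) simp

lemma conn_B: "connectedin RP2_top ((\<lambda>x. pcls (PB r \<sigma> x)) ` IB)"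
  by (rule connectedin_pcls_image[OF PB_cont PB_ne0]) simp

lemma GG_L: "GG r (1/L) = 0"
  unfolding GG_def using NN_eq[of "1/L" r] L0 hL by simp

lemma shared_m: "pcls (PC r 1 (1/m)) = pcls (PB r 1 m)"
proof -
  define d where "d = sqrt (- hh r m / (m + 1 - r))"
  have m1: "m + 1 - r > 0" using mm_pos(2)[of r] by simp
  have hm: "- hh r m > 0" using hB IB_ne by simp
  have q: "- hh r m / (m + 1 - r) > 0" using m1 hm by (intro divide_pos_pos)
  have dpos: "d > 0" unfolding d_def using q by simp
  have "d^2 = - hh r m / (m + 1 - r)" unfolding d_def using q by simp
  then have d2: "d^2 * (m + 1 - r) = - hh r m" using m1 by simp
  have mne: "m \<noteq> r - 1" "m \<noteq> 0" using mm_pos[of r] by auto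
  have "pcls (PC r 1 (1/m)) = pcls (mk m d 1)"
    by (rule PC_of[OF mne(2) GG_aff[OF mne(2) mne(1) d2]]) (use dpos mm_pos(1)[of r] in simp)
  moreover have "pcls (PB r 1 m) = pcls (mk m d 1)"
    by (rule PB_of[OF kk_aff[OF mne(1) d2]]) (use dpos in auto)
  ultimately show ?thesis by simp
qed

lemma Cset_conn: "connectedin RP2_top (Cset r L)"
proof -
  let ?C1 = "(\<lambda>t. pcls (PC r 1 t)) ` IC" and ?C2 = "(\<lambda>t. pcls (PC r (-1) t)) ` IC"
  let ?B1 = "(\<lambda>x. pcls (PB r 1 x)) ` IB" and ?B2 = "(\<lambda>x. pcls (PB r (-1) x)) ` IB"
  have i1: "1/L \<in> IC" using IC_ne by simp
  have e: "pcls (PC r 1 (1/L)) = pcls (PC r (-1) (1/L))" by (simp add: PC_def GG_L)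
  have "pcls (PC r 1 (1/L)) \<in> ?C1" by (rule image_eqI[where x="1/L"]) (use i1 in auto)
  moreover have "pcls (PC r 1 (1/L)) \<in> ?C2" by (rule image_eqI[where x="1/L"]) (use e i1 in auto)
  ultimately have "pcls (PC r 1 (1/L)) \<in> ?C1 \<inter> ?C2" by (rule IntI)
  then have c: "connectedin RP2_top (?C1 \<union> ?C2)" by (intro connectedin_Un[OF conn_C conn_C]) blast
  have i2: "r-1 \<in> IB" using IB_ne by simp
  have e2: "pcls (PB r 1 (r-1)) = pcls (PB r (-1) (r-1))" by (simp add: PB_rm1)
  have "pcls (PB r 1 (r-1)) \<in> ?B1" by (rule image_eqI[where x="r-1"]) (use i2 in auto)
  moreover have "pcls (PB r 1 (r-1)) \<in> ?B2" by (rule image_eqI[where x="r-1"]) (use e2 i2 in auto)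
  ultimately have "pcls (PB r 1 (r-1)) \<in> ?B1 \<inter> ?B2" by (rule IntI)
  then have b: "connectedin RP2_top (?B1 \<union> ?B2)" by (intro connectedin_Un[OF conn_B conn_B]) blast
  have i3: "1/m \<in> IC" "m \<in> IB" using IC_ne IB_ne by auto
  have "pcls (PC r 1 (1/m)) \<in> ?C1" "pcls (PB r 1 m) \<in> ?B1" using i3 by auto
  then have "pcls (PC r 1 (1/m)) \<in> (?C1 \<union> ?C2) \<inter> (?B1 \<union> ?B2)"
    using shared_m by auto
  then have "connectedin RP2_top ((?C1 \<union> ?C2) \<union> (?B1 \<union> ?B2))" by (intro connectedin_Un[OF c b]) blast
  moreover have "Cset r L = (?C1 \<union> ?C2) \<union> (?B1 \<union> ?B2)" unfolding Cset_def by auto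
  ultimately show ?thesis by simp
qed

lemma Cset_sub: "Cset r L \<subseteq> Ecurve r"
  unfolding Cset_def using PC_curve PB_curve PC_ne0 PB_ne0 Ecurve_mem by auto

end




lemma inv_le_negI: "(x::real) \<le> L \<Longrightarrow> L < 0 \<Longrightarrow> 1/L \<le> 1/x"
  using inverse_le_iff_le_neg[of L x] by (simp add: inverse_eq_divide)

lemma inv_le_negI2: "1/L \<le> (t::real) \<Longrightarrow> t < 0 \<Longrightarrow> L < 0 \<Longrightarrow> 1/t \<le> L"
  using inverse_le_iff_le_neg[of t "1/L"] by (simp add: inverse_eq_divide)

lemma abs_sum_aux: "\<bar>a::real\<bar> \<le> B \<Longrightarrow> \<bar>b\<bar> \<le> B \<Longrightarrow> a + b \<le> 2 * B" by linarith

context LL begin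

lemma inC: "\<sigma> = 1 \<or> \<sigma> = -1 \<Longrightarrow> t \<in> IC \<Longrightarrow> pcls (PC r \<sigma> t) \<in> Cset r L"
  unfolding Cset_def by blast
lemma inB: "\<sigma> = 1 \<or> \<sigma> = -1 \<Longrightarrow> x \<in> IB \<Longrightarrow> pcls (PB r \<sigma> x) \<in> Cset r L"
  unfolding Cset_def by blast

lemma zero_IC: "0 \<in> IC" using L0 mm_pos(1)[of r] by simp

lemma classify:
  assumes "P \<in> Ecurve r"
  shows "P \<in> Cset r L \<or> (\<exists>x d. P = pcls (mk x d 1) \<and> L < x \<and> x < r - 1 \<and> d^2 * (x+1-r) = - hh r x)"
proof -
  obtain v where v: "v \<noteq> 0" "Qv r v = 0" "P = pcls v" using assms by (auto simp: Ecurve_eq)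
  define S where "S = v$1 + v$2"
  define D where "D = v$1 - v$2"
  define Z where "Z = v$3"
  have vm: "v = mk S D Z" unfolding S_def D_def Z_def by (rule vec_mk)
  show ?thesis
  proof (cases "Z = 0")
    case True
    have q: "(S^2 - D^2) * S = 0" using v(2) unfolding vm Qv_mk True by simp
    show ?thesis
    proof (cases "S = 0")
      case True
      then have "D \<noteq> 0" using v(1) \<open>Z = 0\<close> unfolding vm mk_eq_0 by simp
      then have "P = pcls (mk 0 1 0)" using pcls_mk_scale[of D 0 1 0] unfolding v(3) vm True \<open>Z=0\<close> by simp
      also have "\<dots> = pcls (PB r 1 (r-1))" by (simp add: PB_rm1)
      finally show ?thesis using inB[of 1 "r-1"] IB_ne by simp
    next
      case False
      then have "S^2 = D^2" using q by simp
      then have "S = D \<or> S = -D" using power2_eq_iff by blast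
      then have "D = S \<or> D = -S" by (elim disjE) simp_all
      then show ?thesis
      proof
        assume "D = S"
        then have "P = pcls (mk 1 1 0)" using pcls_mk_scale[of S 1 1 0] False unfolding v(3) vm \<open>Z=0\<close> by simp
        then show ?thesis using inC[of 1 0] zero_IC by (simp add: PC_0)
      next
        assume "D = -S"
        then have "P = pcls (mk 1 (-1) 0)" using pcls_mk_scale[of S 1 "-1" 0] False unfolding v(3) vm \<open>Z=0\<close> by simp
        then show ?thesis using inC[of "-1" 0] zero_IC by (simp add: PC_0)
      qed
    qed
  next
    case False
    define x where "x = S/Z"
    define d where "d = D/Z"
    have P: "P = pcls (mk x d 1)" unfolding v(3) vm x_def d_def using pcls_mk_aff[OF False] by simp
    have "mk x d 1 = (1/Z) *\<^sub>R mk S D Z" unfolding mk_scale x_def d_def using False by simp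
    then have "Qv r (mk x d 1) = 0" using v(2) unfolding vm by (simp add: Qv_scale)
    then have c: "d^2 * (x+1-r) = - hh r x" by (simp add: aff_curve)
    have xr: "x \<noteq> r - 1"
    proof
      assume "x = r - 1"
      then have "hh r x = 0" using c by simp
      then show False using hh_neg[OF r0, of x] \<open>x = r - 1\<close> by simp
    qed
    consider "x > r - 1" | "x \<le> L" | "L < x \<and> x < r - 1" using xr by linarith
    then show ?thesis
    proof cases
      case 1
      have "- hh r x > 0" using hh_neg[OF r0, of x] 1 by simp
      then have d0: "d \<noteq> 0" using c by auto
      show ?thesis
      proof (cases "x \<le> m")
        case True
        obtain \<sigma> where s: "\<sigma> = 1 \<or> \<sigma> = -1" "\<sigma> * sqrt ((1/d)^2) = 1/d" using sgn_sqrt by blast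
        have "pcls (PB r \<sigma> x) = P" unfolding P by (rule PB_of[OF kk_aff[OF xr c d0] s(2) d0])
        moreover have "x \<in> IB" using 1 True by simp
        ultimately show ?thesis using inB[OF s(1)] by auto
      next
        case False
        then have x0: "x \<noteq> 0" "x > 0" using mm_pos(1)[of r] by auto
        obtain \<sigma> where s: "\<sigma> = 1 \<or> \<sigma> = -1" "\<sigma> * sqrt ((d/x)^2) = d/x" using sgn_sqrt by blast
        have "pcls (PC r \<sigma> (1/x)) = P" unfolding P by (rule PC_of[OF x0(1) GG_aff[OF x0(1) xr c] s(2)])
        moreover have "1/x \<in> IC"
        proof -
          have "1/x \<le> 1/m" using False mm_pos(1)[of r] by (simp add: frac_le)
          moreover have "1/L < 0" "1/x > 0" using L0 x0(2) by simp_all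
          then have "1/L \<le> 1/x" by linarith
          ultimately show ?thesis by simp
        qed
        ultimately show ?thesis using inC[OF s(1)] by auto
      qed
    next
      case 2
      then have x0: "x \<noteq> 0" "x < 0" using L0 by auto
      obtain \<sigma> where s: "\<sigma> = 1 \<or> \<sigma> = -1" "\<sigma> * sqrt ((d/x)^2) = d/x" using sgn_sqrt by blast
      have "pcls (PC r \<sigma> (1/x)) = P" unfolding P by (rule PC_of[OF x0(1) GG_aff[OF x0(1) xr c] s(2)])
      moreover have "1/x \<in> IC"
      proof -
        have "1/x < 0" using x0 by simp
        then have "1/x \<le> 1/m" using mm_pos(1)[of r] by (meson less_eq_real_def less_trans zero_less_divide_1_iff)
        moreover have "1/L \<le> 1/x" using inv_le_negI[OF 2 L0] .
        ultimately show ?thesis by simp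
      qed
      ultimately show ?thesis using inC[OF s(1)] by auto
    next
      case 3
      then show ?thesis using P c by blast
    qed
  qed
qed

lemma Cset_pts:
  assumes "P \<in> Cset r L"
  shows "P = pcls (mk 1 1 0) \<or> P = pcls (mk 1 (-1) 0) \<or> P = pcls (mk 0 1 0) \<or>
         (\<exists>x d. P = pcls (mk x d 1) \<and> (x \<le> L \<or> x > r - 1))"
proof -
  from assms consider (C) \<sigma> t where "\<sigma> = 1 \<or> \<sigma> = -1" "t \<in> IC" "P = pcls (PC r \<sigma> t)"
    | (B) \<sigma> x where "\<sigma> = 1 \<or> \<sigma> = -1" "x \<in> IB" "P = pcls (PB r \<sigma> x)"
    unfolding Cset_def by blast
  then show ?thesis
  proof cases
    case C
    show ?thesis
    proof (cases "t = 0")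
      case True
      then show ?thesis using C by (auto simp: PC_0)
    next
      case False
      define D where "D = \<sigma> * sqrt (GG r t)"
      have P: "P = pcls (mk (1/t) (D/t) 1)" using C(3) pcls_mk_aff[OF False, of 1 D] unfolding PC_def D_def by simp
      have "1/t \<le> L \<or> 1/t > r - 1"
      proof (cases "t < 0")
        case True
        have "1/L \<le> t" using C(2) by simp
        then show ?thesis using inv_le_negI2 True L0 by blast
      next
        case False
        then have "t > 0" using \<open>t \<noteq> 0\<close> by simp
        moreover have "t \<le> 1/m" using C(2) by simp
        ultimately have "1/t \<ge> m" using mm_pos(1)[of r] by (simp add: field_simps)
        then show ?thesis using mm_pos(2)[of r] by simp
      qed
      then show ?thesis using P by blast
    qed
  next
    case B
    show ?thesis
    proof (cases "x = r - 1")
      case True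
      then show ?thesis using B by (simp add: PB_rm1)
    next
      case False
      then have x1: "x > r - 1" using B(2) by simp
      have "kk r x > 0" unfolding kk_def using hB B(2) x1 by (intro divide_pos_pos) auto
      then have Z: "\<sigma> * sqrt (kk r x) \<noteq> 0" using B(1) by auto
      have "P = pcls (mk (x * (\<sigma> * sqrt (kk r x)) / (\<sigma> * sqrt (kk r x))) (1 / (\<sigma> * sqrt (kk r x))) 1)"
        using B(3) pcls_mk_aff[OF Z] unfolding PB_def by simp
      then have "P = pcls (mk x (1 / (\<sigma> * sqrt (kk r x))) 1)" using Z by simp
      then show ?thesis using x1 by blast
    qed
  qed
qed

lemma Cset_unbounded: "\<not> bounded (affine_part (Cset r L))"
proof
  assume "bounded (affine_part (Cset r L))"
  then obtain B where B: "\<And>p. p \<in> affine_part (Cset r L) \<Longrightarrow> norm p \<le> B" unfolding bounded_iff by blast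
  define x where "x = m + 2 * \<bar>B\<bar> + 1"
  have x0: "x > 0" "x \<ge> m" unfolding x_def using mm_pos(1)[of r] by auto
  define t where "t = 1/x"
  have t0: "t \<noteq> 0" "t > 0" using x0 unfolding t_def by auto
  have "t \<in> IC"
  proof -
    have "t \<le> 1/m" unfolding t_def using x0 mm_pos(1)[of r] by (simp add: frac_le)
    moreover have "1/L < 0" using L0 by simp
    then have "1/L \<le> t" using t0 by linarith
    ultimately show ?thesis by simp
  qed
  then have inn: "pcls (PC r 1 t) \<in> Cset r L" using inC by simp
  define D where "D = sqrt (GG r t)"
  have "pcls (PC r 1 t) = pcls (mk (1/t) (D/t) 1)" using pcls_mk_aff[OF t0(1), of 1 D] unfolding PC_def D_def by simp
  also have "\<dots> = pt ((1/t + D/t)/2) ((1/t - D/t)/2) 1" by (rule mk_pt)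
  finally have "((1/t + D/t)/2, (1/t - D/t)/2) \<in> affine_part (Cset r L)"
    using inn unfolding affine_part_def by simp
  then have n: "norm ((1/t + D/t)/2, (1/t - D/t)/2) \<le> B" by (rule B)
  have "\<bar>(1/t + D/t)/2\<bar> \<le> B" "\<bar>(1/t - D/t)/2\<bar> \<le> B"
    using n norm_fst_le[of "(1/t + D/t)/2" "(1/t - D/t)/2"] norm_snd_le[of "(1/t - D/t)/2" "(1/t + D/t)/2"]
    by auto
  then have "(1/t + D/t)/2 + (1/t - D/t)/2 \<le> 2 * B" by (rule abs_sum_aux)
  moreover have "(1/t + D/t)/2 + (1/t - D/t)/2 = x" unfolding t_def by (simp add: field_simps)
  ultimately show False unfolding x_def using mm_pos(1)[of r] by linarith
qed

lemma five_pts_curve: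
  "pt 1 0 0 \<in> Ecurve r" "pt 0 1 0 \<in> Ecurve r" "pt 1 (-1) 0 \<in> Ecurve r"
  "pt (-1) 0 1 \<in> Ecurve r" "pt 0 (-1) 1 \<in> Ecurve r"
  unfolding Ecurve_def by (force simp: Qr_def)+

lemma five_pts:
  assumes "r < 0 \<or> -1 \<le> L"
  shows "{pt 1 0 0, pt 0 1 0, pt 1 (-1) 0, pt (-1) 0 1, pt 0 (-1) 1} \<subseteq> Cset r L"
proof -
  have inf: "pcls (mk S D 0) \<in> Cset r L" if "pcls (mk S D 0) \<in> Ecurve r" for S D
  proof -
    have "\<not> (\<exists>x d. pcls (mk S D 0) = pcls (mk x d 1) \<and> L < x \<and> x < r - 1 \<and> d^2 * (x+1-r) = - hh r x)"
      using pcls_mk1_ne_inf by metis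
    then show ?thesis using classify[OF that] by blast
  qed
  have aff: "pcls (mk (-1) d 1) \<in> Cset r L" if "pcls (mk (-1) d 1) \<in> Ecurve r" for d
  proof -
    have "\<not> (\<exists>x d'. pcls (mk (-1) d 1) = pcls (mk x d' 1) \<and> L < x \<and> x < r - 1 \<and> d'^2 * (x+1-r) = - hh r x)"
    proof
      assume "\<exists>x d'. pcls (mk (-1) d 1) = pcls (mk x d' 1) \<and> L < x \<and> x < r - 1 \<and> d'^2 * (x+1-r) = - hh r x"
      then obtain x d' where "pcls (mk (-1) d 1) = pcls (mk x d' 1)" "L < x" "x < r - 1" by blast
      then have "x = -1" "L < -1" "-1 < r - 1" using pcls_mk1_inj by blast+
      then show False using assms by linarith
    qed
    then show ?thesis using classify[OF that] by blast
  qed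
  have e: "pt 1 0 0 = pcls (mk 1 1 0)" "pt 0 1 0 = pcls (mk 1 (-1) 0)" "pt 1 (-1) 0 = pcls (mk 0 2 0)"
    "pt (-1) 0 1 = pcls (mk (-1) (-1) 1)" "pt 0 (-1) 1 = pcls (mk (-1) 1 1)"
    by (simp_all add: pt_mk)
  show ?thesis using five_pts_curve inf aff unfolding e by auto
qed

end




definition lf :: "real \<Rightarrow> real \<Rightarrow> real \<Rightarrow> real^3 \<Rightarrow> real" where
  "lf p q w v = p * v$1 + q * v$2 + w * v$3"

lemma lf_scale: "lf p q w (c *\<^sub>R v) = c * lf p q w v"
  unfolding lf_def by (simp add: algebra_simps)

lemma lf_mk: "lf p q w (mk S D Z) = p * ((S+D)/2) + q * ((S-D)/2) + w * Z"
  unfolding lf_def by simp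

lemma lf_cont[continuous_intros]: "continuous_on UNIV (lf p q w)"
  unfolding lf_def by (intro continuous_intros)

lemma prod_inv: "c \<noteq> 0 \<Longrightarrow> (0 < (c * a) * (c * b)) = (0 < (a::real) * b)"
proof -
  assume "c \<noteq> 0"
  then have "c * c > 0" by (cases "c > 0") (auto simp: mult_neg_neg)
  moreover have "(c * a) * (c * b) = (c * c) * (a * b)" by (simp add: algebra_simps)
  ultimately show ?thesis by (metis zero_less_mult_pos mult_pos_pos)
qed

definition Wp :: "(real^3 \<Rightarrow> real) \<Rightarrow> (real^3 \<Rightarrow> real) \<Rightarrow> real^3 \<Rightarrow> bool" where
  "Wp f g v = (0 < f v * g v)"

lemma Wp_inv: "c \<noteq> 0 \<Longrightarrow> Wp (lf p q w) (lf p' q' w') (c *\<^sub>R v) = Wp (lf p q w) (lf p' q' w') v"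
  unfolding Wp_def lf_scale by (rule prod_inv)

lemma Wp_open: "open {v. v \<noteq> 0 \<and> Wp (lf p q w) (lf p' q' w') v \<and> Wp (lf p2 q2 w2) (lf p3 q3 w3) v}"
proof -
  have "{v. v \<noteq> 0 \<and> Wp (lf p q w) (lf p' q' w') v \<and> Wp (lf p2 q2 w2) (lf p3 q3 w3) v}
     = {v. (\<lambda>v. 0) v < (\<lambda>v. lf p q w v * lf p' q' w' v) v} \<inter> {v. (\<lambda>v. 0) v < (\<lambda>v. lf p2 q2 w2 v * lf p3 q3 w3 v) v}"
    unfolding Wp_def by (auto simp: lf_def)
  moreover have "open {v. (\<lambda>v. 0) v < (\<lambda>v. lf p q w v * lf p' q' w' v) v}"
    by (rule open_Collect_less) (intro continuous_intros)+
  moreover have "open {v. (\<lambda>v. 0) v < (\<lambda>v. lf p2 q2 w2 v * lf p3 q3 w3 v) v}"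
    by (rule open_Collect_less) (intro continuous_intros)+
  ultimately show ?thesis by auto
qed

lemma Wp_open1: "open {v. v \<noteq> 0 \<and> Wp (lf p q w) (lf p' q' w') v}"
proof -
  have "{v. v \<noteq> 0 \<and> Wp (lf p q w) (lf p' q' w') v}
     = {v. (\<lambda>v. 0) v < (\<lambda>v. lf p q w v * lf p' q' w' v) v}"
    unfolding Wp_def by (auto simp: lf_def)
  moreover have "open {v. (\<lambda>v. 0) v < (\<lambda>v. lf p q w v * lf p' q' w' v) v}"
    by (rule open_Collect_less) (intro continuous_intros)+
  ultimately show ?thesis by auto
qed

definition W2p :: "real \<Rightarrow> real^3 \<Rightarrow> bool" where
  "W2p K v = (K * (\<bar>lf 1 1 0 v\<bar> + \<bar>lf 0 0 1 v\<bar>) < \<bar>lf 1 (-1) 0 v\<bar>)"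

lemma scale_less_aux: "0 < (c'::real) \<Longrightarrow> (K*(c'*A + c'*B) < c'*D) = (K*(A+B) < D)"
proof -
  assume c: "0 < c'"
  have e: "K*(c'*A + c'*B) = c'*(K*(A+B))" by (simp add: algebra_simps)
  show ?thesis by (simp only: e mult_less_cancel_left_pos[OF c])
qed

lemma W2p_inv: assumes "c \<noteq> 0" shows "W2p K (c *\<^sub>R v) = W2p K v"
proof -
  have "\<bar>c\<bar> > 0" using assms by simp
  then show ?thesis unfolding W2p_def lf_scale abs_mult by (rule scale_less_aux)
qed

lemma W2p_open: "open {v. v \<noteq> 0 \<and> W2p K v}"
proof -
  have "{v. v \<noteq> 0 \<and> W2p K v} = {v. (\<lambda>v. K * (\<bar>lf 1 1 0 v\<bar> + \<bar>lf 0 0 1 v\<bar>)) v < (\<lambda>v. \<bar>lf 1 (-1) 0 v\<bar>) v}"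
    unfolding W2p_def by (auto simp: lf_def)
  moreover have "open \<dots>" by (rule open_Collect_less) (intro continuous_intros)+
  ultimately show ?thesis by simp
qed

lemma lin_aux: "(n::real) \<le> A + B \<Longrightarrow> A \<le> X \<Longrightarrow> B \<le> X \<Longrightarrow> X \<le> Y \<Longrightarrow> n \<le> 2 * Y" by linarith

definition gg :: "real \<Rightarrow> real \<Rightarrow> real" where "gg r x = hh r x / (r - 1 - x)"
definition PA :: "real \<Rightarrow> real \<Rightarrow> real \<Rightarrow> real^3" where "PA r \<sigma> x = mk x (\<sigma> * sqrt (gg r x)) 1"

lemma hh_alt: "- hh r x = x^2 * (x+1-r) + 4*(x+1)^2"
  unfolding hh_def by (simp add: algebra_simps power2_eq_square power3_eq_cube)

locale LL2 = LL +
  fixes e2 e3 :: real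
  assumes Le2: "L < e2" and e23: "e2 < e3" and e3r: "e3 < r - 1"
    and hpos: "\<And>x. e2 \<le> x \<Longrightarrow> x \<le> e3 \<Longrightarrow> hh r x \<ge> 0"
    and he2: "hh r e2 = 0"
    and hgap: "\<And>x. L < x \<Longrightarrow> x < r - 1 \<Longrightarrow> hh r x \<ge> 0 \<Longrightarrow> e2 \<le> x \<and> x \<le> e3"
begin

abbreviation "IA \<equiv> {e2..e3}"

definition Dset :: "(real^3) set set" where
  "Dset = (\<Union>\<sigma>\<in>{1,-1}. (\<lambda>x. pcls (PA r \<sigma> x)) ` IA)"

lemma PA_curve: assumes "x \<in> IA" "\<sigma> = 1 \<or> \<sigma> = -1"
  shows "(\<sigma> * sqrt (gg r x))^2 * (x+1-r) = - hh r x"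
proof -
  have x: "r - 1 - x > 0" using assms(1) e3r by simp
  have "gg r x \<ge> 0" unfolding gg_def using hpos[of x] assms(1) x by simp
  then have "(\<sigma> * sqrt (gg r x))^2 = gg r x" using assms(2) by (auto simp: power_mult_distrib)
  then show ?thesis unfolding gg_def using x by (simp add: field_simps)
qed

lemma Dset_sub: "Dset \<subseteq> Ecurve r"
proof
  fix P assume "P \<in> Dset"
  then obtain \<sigma> x where s: "\<sigma> = 1 \<or> \<sigma> = -1" "x \<in> IA" "P = pcls (PA r \<sigma> x)" unfolding Dset_def by blast
  have "Qv r (PA r \<sigma> x) = 0" unfolding PA_def aff_curve using PA_curve[OF s(2,1)] .
  moreover have "PA r \<sigma> x \<noteq> 0" unfolding PA_def mk_eq_0 by simp
  ultimately show "P \<in> Ecurve r" using s(3) Ecurve_mem by simp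
qed

lemma Dset_conn: "connectedin RP2_top Dset"
proof -
  have dn: "\<And>x. x \<in> IA \<Longrightarrow> r - 1 - x \<noteq> 0" using e3r by auto
  have c: "continuous_on IA (gg r)" unfolding gg_def by (intro continuous_intros) (use dn in auto)
  have cc: "continuous_on IA (PA r \<sigma>)" for \<sigma> unfolding PA_def by (intro continuous_intros c)
  have k: "connectedin RP2_top ((\<lambda>x. pcls (PA r \<sigma> x)) ` IA)" for \<sigma>
    by (rule connectedin_pcls_image[OF cc]) (auto simp: PA_def mk_eq_0)
  have i: "e2 \<in> IA" using e23 by simp
  have g0: "gg r e2 = 0" unfolding gg_def he2 by simp
  have e: "pcls (PA r 1 e2) = pcls (PA r (-1) e2)" by (simp add: PA_def g0)
  have "pcls (PA r 1 e2) \<in> (\<lambda>x. pcls (PA r 1 x)) ` IA" by (rule image_eqI[where x=e2]) (use i in auto)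
  moreover have "pcls (PA r 1 e2) \<in> (\<lambda>x. pcls (PA r (-1) x)) ` IA" by (rule image_eqI[where x=e2]) (use e i in auto)
  ultimately have "connectedin RP2_top ((\<lambda>x. pcls (PA r 1 x)) ` IA \<union> (\<lambda>x. pcls (PA r (-1) x)) ` IA)"
    by (intro connectedin_Un[OF k k]) blast
  moreover have "Dset = (\<lambda>x. pcls (PA r 1 x)) ` IA \<union> (\<lambda>x. pcls (PA r (-1) x)) ` IA"
    unfolding Dset_def by auto
  ultimately show ?thesis by simp
qed

lemma Dset_pts: assumes "P \<in> Dset"
  shows "\<exists>x d. P = pcls (mk x d 1) \<and> e2 \<le> x \<and> x \<le> e3 \<and> d^2 * (x+1-r) = - hh r x"
proof -
  obtain \<sigma> x where s: "\<sigma> = 1 \<or> \<sigma> = -1" "x \<in> IA" "P = pcls (PA r \<sigma> x)" using assms unfolding Dset_def by blast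
  then show ?thesis using PA_curve[OF s(2,1)] unfolding PA_def by auto
qed

lemma Dset_in: assumes "e2 \<le> x" "x \<le> e3" "d^2 * (x+1-r) = - hh r x"
  shows "pcls (mk x d 1) \<in> Dset"
proof -
  have x: "r - 1 - x > 0" using assms(2) e3r by simp
  have "d^2 = gg r x" unfolding gg_def using assms(3) x by (simp add: field_simps)
  obtain \<sigma> where s: "\<sigma> = 1 \<or> \<sigma> = -1" "\<sigma> * sqrt (d^2) = d" using sgn_sqrt by blast
  have "PA r \<sigma> x = mk x d 1" unfolding PA_def using s(2) \<open>d^2 = gg r x\<close> by simp
  then show ?thesis unfolding Dset_def using s(1) assms(1,2) by force
qed

lemma curve_split: "Ecurve r \<subseteq> Cset r L \<union> Dset"
proof
  fix P assume "P \<in> Ecurve r"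
  from classify[OF this] show "P \<in> Cset r L \<union> Dset"
  proof
    assume "\<exists>x d. P = pcls (mk x d 1) \<and> L < x \<and> x < r - 1 \<and> d^2 * (x+1-r) = - hh r x"
    then obtain x d where xd: "P = pcls (mk x d 1)" "L < x" "x < r - 1" "d^2 * (x+1-r) = - hh r x" by blast
    have "d^2 * (x+1-r) \<le> 0" using xd(3) by (simp add: mult_nonneg_nonpos)
    then have "hh r x \<ge> 0" using xd(4) by simp
    then have "e2 \<le> x \<and> x \<le> e3" using hgap xd(2,3) by blast
    then show ?thesis using Dset_in xd by auto
  qed auto
qed

lemma mk_ne0: "S \<noteq> 0 \<or> D \<noteq> 0 \<or> Z \<noteq> 0 \<Longrightarrow> mk S D Z \<noteq> 0" by (simp add: mk_eq_0)

definition c1 where "c1 = (L + e2)/2"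
definition c2 where "c2 = (e3 + r - 1)/2"
definition KK where "KK = \<bar>e2\<bar> + \<bar>e3\<bar> + 1"

definition Wd where "Wd = psetp (\<lambda>v. Wp (lf 1 1 (-c1)) (lf 0 0 1) v \<and> Wp (lf (-1) (-1) c2) (lf 0 0 1) v)"
definition W1 where "W1 = psetp (Wp (lf 1 1 (-c1)) (lf 1 1 (-c2)))"
definition W2 where "W2 = psetp (W2p KK)"

lemma Wd_open: "openin RP2_top Wd"
  unfolding Wd_def by (rule openin_psetp) (auto simp: Wp_inv Wp_open)
lemma W1_open: "openin RP2_top W1"
  unfolding W1_def by (rule openin_psetp) (auto simp: Wp_inv Wp_open1)
lemma W2_open: "openin RP2_top W2"
  unfolding W2_def by (rule openin_psetp) (auto simp: W2p_inv W2p_open)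


lemma lf_mk11: "lf 1 1 (-w) (mk S D Z) = S - w*Z" "lf 1 1 0 (mk S D Z) = S"
  "lf (-1) (-1) w (mk S D Z) = w*Z - S" "lf 0 0 1 (mk S D Z) = Z" "lf 1 (-1) 0 (mk S D Z) = D"
  unfolding lf_mk by (simp_all add: field_simps)

lemma Wd_inv: "c \<noteq> 0 \<Longrightarrow> (Wp (lf 1 1 (-c1)) (lf 0 0 1) (c *\<^sub>R v) \<and> Wp (lf (-1) (-1) c2) (lf 0 0 1) (c *\<^sub>R v))
   = (Wp (lf 1 1 (-c1)) (lf 0 0 1) v \<and> Wp (lf (-1) (-1) c2) (lf 0 0 1) v)"
  by (simp add: Wp_inv)

lemma Wd_mem: assumes "S \<noteq> 0 \<or> D \<noteq> 0 \<or> Z \<noteq> 0"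
  shows "pcls (mk S D Z) \<in> Wd \<longleftrightarrow> (0 < (S - c1 * Z) * Z \<and> 0 < (c2 * Z - S) * Z)"
proof -
  have "pcls (mk S D Z) \<in> Wd \<longleftrightarrow> (Wp (lf 1 1 (-c1)) (lf 0 0 1) (mk S D Z) \<and> Wp (lf (-1) (-1) c2) (lf 0 0 1) (mk S D Z))"
    unfolding Wd_def by (rule psetp_mem[OF Wd_inv mk_ne0[OF assms]])
  then show ?thesis unfolding Wp_def lf_mk11 .
qed

lemma W1_mem: assumes "S \<noteq> 0 \<or> D \<noteq> 0 \<or> Z \<noteq> 0"
  shows "pcls (mk S D Z) \<in> W1 \<longleftrightarrow> 0 < (S - c1 * Z) * (S - c2 * Z)"
proof -
  have "pcls (mk S D Z) \<in> W1 \<longleftrightarrow> Wp (lf 1 1 (-c1)) (lf 1 1 (-c2)) (mk S D Z)"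
    unfolding W1_def by (rule psetp_mem[OF Wp_inv mk_ne0[OF assms]])
  then show ?thesis unfolding Wp_def lf_mk11 .
qed

lemma W2_mem: assumes "S \<noteq> 0 \<or> D \<noteq> 0 \<or> Z \<noteq> 0"
  shows "pcls (mk S D Z) \<in> W2 \<longleftrightarrow> KK * (\<bar>S\<bar> + \<bar>Z\<bar>) < \<bar>D\<bar>"
proof -
  have "pcls (mk S D Z) \<in> W2 \<longleftrightarrow> W2p KK (mk S D Z)"
    unfolding W2_def by (rule psetp_mem[OF W2p_inv mk_ne0[OF assms]])
  then show ?thesis unfolding W2p_def lf_mk11 .
qed

lemma cc: "L < c1" "c1 < e2" "e3 < c2" "c2 < r - 1" "c1 < c2" "KK \<ge> 1"
  unfolding c1_def c2_def KK_def using Le2 e23 e3r by auto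

lemma Cset_W: "Cset r L \<subseteq> W1 \<union> W2" "Cset r L \<inter> Wd = {}"
proof -
  { fix P assume "P \<in> Cset r L"
    from Cset_pts[OF this] have "P \<in> W1 \<union> W2 \<and> P \<notin> Wd"
    proof (elim disjE)
      assume "P = pcls (mk 1 1 0)" then show ?thesis using W1_mem[of 1 1 0] Wd_mem[of 1 1 0] by simp
    next
      assume "P = pcls (mk 1 (-1) 0)" then show ?thesis using W1_mem[of 1 "-1" 0] Wd_mem[of 1 "-1" 0] by simp
    next
      assume "P = pcls (mk 0 1 0)" then show ?thesis using W2_mem[of 0 1 0] Wd_mem[of 0 1 0] by simp
    next
      assume "\<exists>x d. P = pcls (mk x d 1) \<and> (x \<le> L \<or> x > r - 1)"
      then obtain x d where P: "P = pcls (mk x d 1)" and x: "x \<le> L \<or> r - 1 < x" by blast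
      have "0 < (x - c1) * (x - c2)"
        using x cc by (auto intro: mult_pos_pos mult_neg_neg)
      moreover have "\<not> (0 < (x - c1) \<and> 0 < (c2 - x))" using x cc by auto
      ultimately show ?thesis using P W1_mem[of x d 1] Wd_mem[of x d 1] by simp
    qed }
  then show "Cset r L \<subseteq> W1 \<union> W2" "Cset r L \<inter> Wd = {}" by auto
qed

lemma D_small: assumes "d^2 * (x+1-r) = - hh r x" "x < r - 1"
  shows "d^2 \<le> x^2" "x \<noteq> -1 \<Longrightarrow> d^2 < x^2"
proof -
  have e: "(d^2 - x^2) * (x+1-r) = 4*(x+1)^2" using assms(1) hh_alt[of r x] by (simp add: algebra_simps)
  have n: "x + 1 - r < 0" using assms(2) by simp
  show "d^2 \<le> x^2"
  proof (rule ccontr)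
    assume "\<not> ?thesis"
    then have "(d^2 - x^2) * (x+1-r) < 0" using n by (simp add: mult_pos_neg)
    then show False using e by simp
  qed
  assume "x \<noteq> -1"
  then have "4*(x+1)^2 > 0" by simp
  show "d^2 < x^2"
  proof (rule ccontr)
    assume "\<not> ?thesis"
    then have "(d^2 - x^2) * (x+1-r) \<le> 0" using n by (simp add: mult_nonneg_nonpos)
    then show False using e \<open>4*(x+1)^2 > 0\<close> by simp
  qed
qed

lemma Dset_W: "Dset \<subseteq> Wd" "Dset \<inter> (W1 \<union> W2) = {}"
proof -
  { fix P assume "P \<in> Dset"
    from Dset_pts[OF this] obtain x d where xd: "P = pcls (mk x d 1)" "e2 \<le> x" "x \<le> e3"
      "d^2 * (x+1-r) = - hh r x" by blast
    have a: "0 < (x - c1) * 1 \<and> 0 < (c2 * 1 - x) * 1" using xd cc by simp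
    have "(x - c1) * (x - c2) < 0" by (rule mult_pos_neg) (use xd cc in auto)
    then have b: "\<not> 0 < (x - c1) * (x - c2)" by simp
    have "d^2 \<le> x^2" using D_small(1)[OF xd(4)] xd(3) e3r by simp
    then have "\<bar>d\<bar> \<le> \<bar>x\<bar>" using abs_le_square_iff by blast
    then have "\<not> KK * (\<bar>x\<bar> + \<bar>1\<bar>) < \<bar>d\<bar>"
    proof -
      have "\<bar>x\<bar> \<le> KK * (\<bar>x\<bar> + 1)" using cc(6) by (smt (verit) mult_le_cancel_right1 abs_ge_zero)
      then show ?thesis using \<open>\<bar>d\<bar> \<le> \<bar>x\<bar>\<close> by simp
    qed
    then have "P \<in> Wd \<and> P \<notin> W1 \<and> P \<notin> W2"
      using xd(1) a b Wd_mem[of x d 1] W1_mem[of x d 1] W2_mem[of x d 1] by simp }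
  then show "Dset \<subseteq> Wd" "Dset \<inter> (W1 \<union> W2) = {}" by auto
qed

lemma X_top: "topspace (subtopology RP2_top (Ecurve r)) = Ecurve r"
  using Ecurve_sub_RP2 by (auto simp: topspace_RP2_top)

lemma two_comp: "connected_components_of (subtopology RP2_top (Ecurve r)) = {Cset r L, Dset}"
proof (rule two_components)
  show "topspace (subtopology RP2_top (Ecurve r)) = Cset r L \<union> Dset"
    unfolding X_top using curve_split Cset_sub Dset_sub by auto
  show "Cset r L \<inter> Dset = {}" using Cset_W(2) Dset_W(1) by auto
  show "Cset r L \<noteq> {}" using inC[of 1 0] zero_IC by auto
  show "Dset \<noteq> {}" unfolding Dset_def using e23 by auto
  show "connectedin (subtopology RP2_top (Ecurve r)) (Cset r L)"
    using Cset_conn Cset_sub by (simp add: connectedin_subtopology)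
  show "connectedin (subtopology RP2_top (Ecurve r)) Dset"
    using Dset_conn Dset_sub by (simp add: connectedin_subtopology)
  have "Cset r L = (W1 \<union> W2) \<inter> Ecurve r"
    using Cset_W(1) Cset_sub curve_split Dset_W(2) by auto
  then show "openin (subtopology RP2_top (Ecurve r)) (Cset r L)"
    unfolding openin_subtopology using W1_open W2_open by (meson openin_Un)
  have "Dset = Wd \<inter> Ecurve r"
    using Dset_W(1) Dset_sub curve_split Cset_W(2) by auto
  then show "openin (subtopology RP2_top (Ecurve r)) Dset"
    unfolding openin_subtopology using Wd_open by blast
qed

lemma Dset_ne_C: "Dset \<noteq> Cset r L"
proof
  assume "Dset = Cset r L"
  moreover have "pcls (mk 1 1 0) \<in> Cset r L" using inC[of 1 0] zero_IC by (simp add: PC_0)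
  ultimately obtain x d where "pcls (mk 1 1 0) = pcls (mk x d 1)" using Dset_pts by metis
  then show False using pcls_mk1_ne_inf by metis
qed

lemma Dset_bounded: "bounded (affine_part Dset)"
  unfolding bounded_iff
proof (intro exI ballI)
  fix p assume "p \<in> affine_part Dset"
  then obtain a b where p: "p = (a, b)" "pt a b 1 \<in> Dset" unfolding affine_part_def by auto
  then obtain x d where xd: "pt a b 1 = pcls (mk x d 1)" "e2 \<le> x" "x \<le> e3" "d^2 * (x+1-r) = - hh r x"
    using Dset_pts by blast
  have "pcls (mk (a+b) (a-b) 1) = pcls (mk x d 1)" using xd(1) by (simp add: pt_mk)
  then have ab: "a + b = x" "a - b = d" using pcls_mk1_inj by blast+
  have "d^2 \<le> x^2" using D_small(1)[OF xd(4)] xd(3) e3r by simp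
  then have dx: "\<bar>d\<bar> \<le> \<bar>x\<bar>" using abs_le_square_iff by blast
  have xb: "\<bar>x\<bar> \<le> \<bar>e2\<bar> + \<bar>e3\<bar>" using xd(2,3) by linarith
  have a2: "a = (x + d)/2" using ab by (auto simp: field_simps)
  have b2: "b = (x - d)/2" using ab by (auto simp: field_simps)
  have "\<bar>a\<bar> \<le> \<bar>x\<bar>" unfolding a2 using dx by (auto simp: abs_le_iff)
  have "\<bar>b\<bar> \<le> \<bar>x\<bar>" unfolding b2 using dx by (auto simp: abs_le_iff)
  then have "norm p \<le> \<bar>a\<bar> + \<bar>b\<bar>" using norm_Pair_le[of a b] p(1) by simp
  then show "norm p \<le> 2 * (\<bar>e2\<bar> + \<bar>e3\<bar>)" using \<open>\<bar>a\<bar> \<le> \<bar>x\<bar>\<close> \<open>\<bar>b\<bar> \<le> \<bar>x\<bar>\<close> xb by (rule lin_aux)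
qed

lemma Dset_quadrant:
  "e3 < -1 \<Longrightarrow> Dset \<subseteq> {pt x y 1 | x y. x < 0 \<and> y < 0}"
  "0 < e2 \<Longrightarrow> Dset \<subseteq> {pt x y 1 | x y. 0 < x \<and> 0 < y}"
proof -
  { fix P assume "P \<in> Dset"
    then obtain x d where xd: "P = pcls (mk x d 1)" "e2 \<le> x" "x \<le> e3" "d^2 * (x+1-r) = - hh r x"
      using Dset_pts by blast
    have P: "P = pt ((x+d)/2) ((x-d)/2) 1" using xd(1) by (simp add: mk_pt)
    have "(x \<noteq> -1 \<longrightarrow> \<bar>d\<bar> < \<bar>x\<bar>)" using D_small(2)[OF xd(4)] xd(3) e3r by (metis abs_le_square_iff not_le order.strict_trans1)
    note dd = this
    have "(e3 < -1 \<longrightarrow> P \<in> {pt x y 1 | x y. x < 0 \<and> y < 0}) \<and>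
               (0 < e2 \<longrightarrow> P \<in> {pt x y 1 | x y. 0 < x \<and> 0 < y})"
    proof (intro conjI impI)
      assume "e3 < -1"
      then have "x < -1" using xd(3) by simp
      then have "\<bar>d\<bar> < - x" using dd by simp
      then have "(x+d)/2 < 0" "(x-d)/2 < 0" by (auto simp: abs_less_iff)
      then show "P \<in> {pt x y 1 | x y. x < 0 \<and> y < 0}" using P by blast
    next
      assume "0 < e2"
      then have "x > 0" using xd(2) by simp
      then have "\<bar>d\<bar> < x" using dd by simp
      then have "(x+d)/2 > 0" "(x-d)/2 > 0" by (auto simp: abs_less_iff)
      then show "P \<in> {pt x y 1 | x y. 0 < x \<and> 0 < y}" using P by blast
    qed }
  then show "e3 < -1 \<Longrightarrow> Dset \<subseteq> {pt x y 1 | x y. x < 0 \<and> y < 0}"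
    "0 < e2 \<Longrightarrow> Dset \<subseteq> {pt x y 1 | x y. 0 < x \<and> 0 < y}" by blast+
qed

end




lemma pt_curve: assumes "(x, y, z) \<noteq> (0, 0, 0)" "pt x y z \<in> Ecurve r" shows "Qr r x y z = 0"
proof -
  have "vector [x, y, z] \<noteq> (0::real^3)" using assms(1) by (auto simp: vec_eq_iff forall_3)
  then have "Qv r (vector [x, y, z]) = 0" using assms(2) Ecurve_mem unfolding pt_def by blast
  then show ?thesis by (simp add: Qv_def)
qed

lemma pt_scale: "c \<noteq> 0 \<Longrightarrow> pt (c*x) (c*y) (c*z) = pt x y z"
  unfolding pt_mk using pcls_mk_scale[of c "x+y" "x-y" z] by (simp add: algebra_simps)

lemma curve_lines:
  "Ecurve r \<inter> (line_x0 \<union> line_y0 \<union> line_z0) \<subseteq> {pt 1 0 0, pt 0 1 0, pt 1 (-1) 0, pt (-1) 0 1, pt 0 (-1) 1}"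
proof
  fix P assume P: "P \<in> Ecurve r \<inter> (line_x0 \<union> line_y0 \<union> line_z0)"
  then have Pc: "P \<in> Ecurve r" by simp
  from P consider (X) y z where "P = pt 0 y z" "(y, z) \<noteq> (0, 0)"
    | (Y) x z where "P = pt x 0 z" "(x, z) \<noteq> (0, 0)"
    | (Z) x y where "P = pt x y 0" "(x, y) \<noteq> (0, 0)"
    unfolding line_x0_def line_y0_def line_z0_def by blast
  then show "P \<in> {pt 1 0 0, pt 0 1 0, pt 1 (-1) 0, pt (-1) 0 1, pt 0 (-1) 1}"
  proof cases
    case X
    have "Qr r 0 y z = 0" using pt_curve[of 0 y z r] X Pc by auto
    then have "z * (y+z)^2 = 0" unfolding Qr_def by (simp add: algebra_simps power2_eq_square power3_eq_cube)
    then have "z = 0 \<or> y + z = 0" by simp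
    then show ?thesis
    proof
      assume z: "z = 0"
      then have "y \<noteq> 0" using X by simp
      then have "P = pt 0 1 0" using X(1) z pt_scale[of y 0 1 0] by simp
      then show ?thesis by simp
    next
      assume "y + z = 0"
      then have y: "y = -z" by simp
      then have "z \<noteq> 0" using X by simp
      then have "P = pt 0 (-1) 1" using X(1) y pt_scale[of z 0 "-1" 1] by simp
      then show ?thesis by simp
    qed
  next
    case Y
    have "Qr r x 0 z = 0" using pt_curve[of x 0 z r] Y Pc by auto
    then have "z * (x+z)^2 = 0" unfolding Qr_def by (simp add: algebra_simps power2_eq_square power3_eq_cube)
    then have "z = 0 \<or> x + z = 0" by simp
    then show ?thesis
    proof
      assume z: "z = 0"
      then have "x \<noteq> 0" using Y by simp
      then have "P = pt 1 0 0" using Y(1) z pt_scale[of x 1 0 0] by simp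
      then show ?thesis by simp
    next
      assume "x + z = 0"
      then have x: "x = -z" by simp
      then have "z \<noteq> 0" using Y by simp
      then have "P = pt (-1) 0 1" using Y(1) x pt_scale[of z "-1" 0 1] by simp
      then show ?thesis by simp
    qed
  next
    case Z
    have "Qr r x y 0 = 0" using pt_curve[of x y 0 r] Z Pc by auto
    then have "x * y * (x+y) = 0" unfolding Qr_def by (simp add: algebra_simps power2_eq_square)
    then have "x = 0 \<or> y = 0 \<or> x + y = 0" by simp
    then show ?thesis
    proof (elim disjE)
      assume x: "x = 0"
      then have "y \<noteq> 0" using Z by simp
      then have "P = pt 0 1 0" using Z(1) x pt_scale[of y 0 1 0] by simp
      then show ?thesis by simp
    next
      assume y: "y = 0"
      then have "x \<noteq> 0" using Z by simp
      then have "P = pt 1 0 0" using Z(1) y pt_scale[of x 1 0 0] by simp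
      then show ?thesis by simp
    next
      assume "x + y = 0"
      then have y: "y = -x" by simp
      then have "x \<noteq> 0" using Z by simp
      then have "P = pt 1 (-1) 0" using Z(1) y pt_scale[of x 1 "-1" 0] by simp
      then show ?thesis by simp
    qed
  qed
qed

lemma five_on_lines:
  "{pt 1 0 0, pt 0 1 0, pt 1 (-1) 0, pt (-1) 0 1, pt 0 (-1) 1} \<subseteq> line_x0 \<union> line_y0 \<union> line_z0"
proof -
  have "pt 1 0 0 \<in> line_y0" unfolding line_y0_def by (intro CollectI exI[of _ 1] exI[of _ 0] conjI) simp_all
  moreover have "pt 0 1 0 \<in> line_x0" unfolding line_x0_def by (intro CollectI exI[of _ 1] exI[of _ 0] conjI) simp_all
  moreover have "pt 1 (-1) 0 \<in> line_z0" unfolding line_z0_def by (intro CollectI exI[of _ 1] exI[of _ "-1"] conjI) simp_all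
  moreover have "pt (-1) 0 1 \<in> line_y0" unfolding line_y0_def by (intro CollectI exI[of _ "-1"] exI[of _ 1] conjI) simp_all
  moreover have "pt 0 (-1) 1 \<in> line_x0" unfolding line_x0_def by (intro CollectI exI[of _ "-1"] exI[of _ 1] conjI) simp_all
  ultimately show ?thesis by blast
qed

lemma X_top': "topspace (subtopology RP2_top (Ecurve r)) = Ecurve r"
  using Ecurve_sub_RP2 by (auto simp: topspace_RP2_top)

theorem lemma3p2:
  fixes r :: real
  assumes "r \<noteq> 0" and "r \<noteq> r_minus" and "r \<noteq> r_plus"
  shows "\<exists>C \<in> connected_components_of (subtopology RP2_top (Ecurve r)).
     \<not> bounded (affine_part C)
   \<and> {pt 1 0 0, pt 0 1 0, pt 1 (-1) 0, pt (-1) 0 1, pt 0 (-1) 1} \<subseteq> C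
   \<and> C \<inter> (line_x0 \<union> line_y0 \<union> line_z0)
       = {pt 1 0 0, pt 0 1 0, pt 1 (-1) 0, pt (-1) 0 1, pt 0 (-1) 1}
   \<and> ((r < r_minus \<or> (0 < r \<and> r < r_plus)) \<longrightarrow>
        connected_components_of (subtopology RP2_top (Ecurve r)) = {C})
   \<and> ((r_minus < r \<and> r < 0) \<longrightarrow>
        (\<exists>D. connected_components_of (subtopology RP2_top (Ecurve r)) = {C, D} \<and> D \<noteq> C
             \<and> bounded (affine_part D) \<and> D \<subseteq> {pt x y 1 | x y. x < 0 \<and> y < 0}))
   \<and> (r_plus < r \<longrightarrow>
        (\<exists>D. connected_components_of (subtopology RP2_top (Ecurve r)) = {C, D} \<and> D \<noteq> C
             \<and> bounded (affine_part D) \<and> D \<subseteq> {pt x y 1 | x y. 0 < x \<and> 0 < y}))"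
proof -
  let ?X = "subtopology RP2_top (Ecurve r)"
  let ?F = "{pt 1 0 0, pt 0 1 0, pt 1 (-1) 0, pt (-1) 0 1, pt 0 (-1) 1}"
  have rp: "r_minus < 0" "0 < r_plus" "r_plus > 5" using rpm by auto
  have dfac: "r*(r^2-11*r-1) = r * ((r - r_plus) * (r - r_minus))" using rpm(4)[of r] by simp
  have lines: "C \<inter> (line_x0 \<union> line_y0 \<union> line_z0) = ?F" if "?F \<subseteq> C" "C \<subseteq> Ecurve r" for C
  proof (rule equalityI)
    have "C \<inter> (line_x0 \<union> line_y0 \<union> line_z0) \<subseteq> Ecurve r \<inter> (line_x0 \<union> line_y0 \<union> line_z0)"
      using that(2) by (rule Int_mono) simp
    then show "C \<inter> (line_x0 \<union> line_y0 \<union> line_z0) \<subseteq> ?F" using curve_lines[of r] by (rule subset_trans)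
    show "?F \<subseteq> C \<inter> (line_x0 \<union> line_y0 \<union> line_z0)" using that(1) five_on_lines by (rule Int_greatest)
  qed
  consider (A) "r < r_minus \<or> (0 < r \<and> r < r_plus)" | (B) "(r_minus < r \<and> r < 0) \<or> r_plus < r"
    using assms rp by linarith
  then show ?thesis
  proof cases
    case A
    have neg: "r*(r^2-11*r-1) < 0"
      using A
    proof
      assume a: "r < r_minus"
      then have "(r - r_plus) * (r - r_minus) > 0" using rp by (intro mult_neg_neg) auto
      moreover have "r < 0" using a rp by simp
      ultimately show ?thesis unfolding dfac by (simp add: mult_neg_pos)
    next
      assume a: "0 < r \<and> r < r_plus"
      then have "(r - r_plus) * (r - r_minus) < 0" using rp by (intro mult_neg_pos) auto
      then show ?thesis unfolding dfac using a by (simp add: mult_pos_neg)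
    qed
    obtain L where L: "L < 0" "L < r - 1" "hh r L = 0" "\<And>s. hh r s \<ge> 0 \<longleftrightarrow> s \<le> L"
      using one_root[OF assms(1) neg] by blast
    have hle: "\<And>x. x \<le> L \<Longrightarrow> hh r x \<ge> 0" using L(4) by blast
    have LLi: "LL r L" unfolding LL_def using assms(1) L(1-3) hle by blast
    interpret LL r L by (rule LLi)
    have five: "r < 0 \<or> -1 \<le> L"
    proof (cases "r < 0")
      case False
      then have "hh r (-1) \<ge> 0" using hh_at_neg1[of r] by simp
      then show ?thesis using L(4) by blast
    qed simp
    have eq: "Ecurve r = Cset r L"
    proof
      show "Cset r L \<subseteq> Ecurve r" by (rule Cset_sub)
      show "Ecurve r \<subseteq> Cset r L"
      proof
        fix P assume "P \<in> Ecurve r"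
        from classify[OF this] show "P \<in> Cset r L"
        proof
          assume "\<exists>x d. P = pcls (mk x d 1) \<and> L < x \<and> x < r - 1 \<and> d^2 * (x+1-r) = - hh r x"
          then obtain x d where xd: "L < x" "x < r - 1" "d^2 * (x+1-r) = - hh r x" by blast
          have "d^2 * (x+1-r) \<le> 0" using xd(2) by (simp add: mult_nonneg_nonpos)
          then have "hh r x \<ge> 0" using xd(3) by simp
          then show ?thesis using L(4) xd(1) by auto
        qed
      qed
    qed
    have comp: "connected_components_of ?X = {Cset r L}"
    proof -
      have cs: "connected_space ?X" using Cset_conn eq by (simp add: connected_space_subtopology)
      have ts: "topspace ?X = Cset r L" using X_top'[of r] eq by simp
      have "pcls (PC r 1 0) \<in> Cset r L" using inC[of 1 0] zero_IC by simp
      then have "topspace ?X \<noteq> {}" using ts by auto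
      then have nt: "?X \<noteq> trivial_topology"
      proof (rule contrapos_nn)
        assume "?X = trivial_topology"
        then show "topspace ?X = {}" by (simp only: null_topspace_iff_trivial)
      qed
      show ?thesis unfolding connected_components_of_eq_singleton using cs nt ts by simp
    qed
    show ?thesis
    proof (rule bexI[of _ "Cset r L"], intro conjI impI)
      show "\<not> bounded (affine_part (Cset r L))" by (rule Cset_unbounded)
      show f: "?F \<subseteq> Cset r L" by (rule five_pts[OF five])
      show "Cset r L \<inter> (line_x0 \<union> line_y0 \<union> line_z0) = ?F" using lines[OF f Cset_sub] .
      show "connected_components_of ?X = {Cset r L}" by (rule comp)
      show "Cset r L \<in> connected_components_of ?X" using comp by simp
    next
      assume "r_minus < r \<and> r < 0" then show "\<exists>D. connected_components_of ?X = {Cset r L, D} \<and> D \<noteq> Cset r L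
             \<and> bounded (affine_part D) \<and> D \<subseteq> {pt x y 1 | x y. x < 0 \<and> y < 0}" using A rp by linarith
    next
      assume "r_plus < r" then show "\<exists>D. connected_components_of ?X = {Cset r L, D} \<and> D \<noteq> Cset r L
             \<and> bounded (affine_part D) \<and> D \<subseteq> {pt x y 1 | x y. 0 < x \<and> 0 < y}" using A rp by linarith
    qed
  next
    case B
    have pos: "r*(r^2-11*r-1) > 0"
      using B
    proof
      assume a: "r_minus < r \<and> r < 0"
      then have "(r - r_plus) * (r - r_minus) < 0" using rp by (intro mult_neg_pos) auto
      then show ?thesis unfolding dfac using a by (simp add: mult_neg_neg)
    next
      assume a: "r_plus < r"
      then have "(r - r_plus) * (r - r_minus) > 0" using rp by (intro mult_pos_pos) auto
      then show ?thesis unfolding dfac using a rp by simp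
    qed
    obtain e1 e2 e3 where e: "e1 < e2" "e2 < e3" "e3 < r - 1" "e1 < 0"
      "\<And>s. hh r s = - ((s-e1)*(s-e2)*(s-e3))"
      using three_roots[OF assms(1) pos] by blast
    have sgn: "\<And>s. hh r s \<ge> 0 \<longleftrightarrow> s \<le> e1 \<or> (e2 \<le> s \<and> s \<le> e3)"
      using three_sign[OF e(1,2) e(5)] by blast
    have h1: "hh r e1 = 0" "hh r e2 = 0" using e(5) by simp_all
    have i1: "\<And>x. x \<le> e1 \<Longrightarrow> hh r x \<ge> 0" using sgn by blast
    have i2: "\<And>x. e2 \<le> x \<Longrightarrow> x \<le> e3 \<Longrightarrow> hh r x \<ge> 0" using sgn by blast
    have i3: "\<And>x. e1 < x \<Longrightarrow> x < r - 1 \<Longrightarrow> hh r x \<ge> 0 \<Longrightarrow> e2 \<le> x \<and> x \<le> e3"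
    proof -
      fix x assume "e1 < x" "x < r - 1" "hh r x \<ge> 0"
      then show "e2 \<le> x \<and> x \<le> e3" using sgn[of x] by linarith
    qed
    have e1r: "e1 < r - 1" using e(1-3) by linarith
    have LL2i: "LL2 r e1 e2 e3" unfolding LL2_def LL_def LL2_axioms_def
      using assms(1) e(1-4) h1 i1 i2 i3 e1r by blast
    interpret LL2 r e1 e2 e3 by (rule LL2i)
    have e2pos: "r_plus < r \<Longrightarrow> 0 < e2"
    proof (rule ccontr)
      assume "r_plus < r" "\<not> 0 < e2"
      then have "hh r e1 > hh r e2" using hh_decr[of r e1 e2] e(1) rp by simp
      then show False using h1 by simp
    qed
    have five: "r < 0 \<or> -1 \<le> e1"
    proof (cases "r < 0")
      case False
      then have r: "r_plus < r" using B rp by linarith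
      have "hh r (-1) \<ge> 0" using hh_at_neg1[of r] False by simp
      then show ?thesis using sgn[of "-1"] e2pos[OF r] by auto
    qed simp
    have comp: "connected_components_of ?X = {Cset r e1, Dset}" by (rule two_comp)
    show ?thesis
    proof (rule bexI[of _ "Cset r e1"], intro conjI impI)
      show "\<not> bounded (affine_part (Cset r e1))" by (rule Cset_unbounded)
      show f: "?F \<subseteq> Cset r e1" by (rule five_pts[OF five])
      show "Cset r e1 \<inter> (line_x0 \<union> line_y0 \<union> line_z0) = ?F" using lines[OF f Cset_sub] .
      show "Cset r e1 \<in> connected_components_of ?X" using comp by simp
    next
      assume "r < r_minus \<or> (0 < r \<and> r < r_plus)"
      then show "connected_components_of ?X = {Cset r e1}" using B rp by linarith
    next
      assume a: "r_minus < r \<and> r < 0"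
      have "e3 < -1" using e(3) a by simp
      then show "\<exists>D. connected_components_of ?X = {Cset r e1, D} \<and> D \<noteq> Cset r e1
             \<and> bounded (affine_part D) \<and> D \<subseteq> {pt x y 1 | x y. x < 0 \<and> y < 0}"
        by (intro exI[of _ Dset] conjI comp Dset_ne_C Dset_bounded Dset_quadrant(1))
    next
      assume a: "r_plus < r"
      then show "\<exists>D. connected_components_of ?X = {Cset r e1, D} \<and> D \<noteq> Cset r e1
             \<and> bounded (affine_part D) \<and> D \<subseteq> {pt x y 1 | x y. 0 < x \<and> 0 < y}"
        by (intro exI[of _ Dset] conjI comp Dset_ne_C Dset_bounded Dset_quadrant(2) e2pos a)
    qed
  qed
qed



end
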